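(* Consider an $[[n,k]]$ stabilizer code with Clifford encoder $U_E$, stabilizer group $\mathcal S$, set of syndrome representatives $T=\{E_s\}$ and correction operators $C_s=E_s$, and let $\{\sqrt{p_i}E_i\}$ be the Kraus operators of the $n$-qubit depolarizing channel. Let $s_i$ be the error syndrome of $E_i$ and \[ W_{l,i,s}=(I^{\otimes k}\otimes\langle l|)\,U_E^\dagger C_sP_s\sqrt{p_i}E_iU_E\,(I^{\otimes k}\otimes|0\rangle^{\otimes n-k}). \] Then \[ \frac{1}{2^{2k}}\sum_l\left|\mathrm{tr}(W_{l,i,s_i})\right|^2=\begin{cases}p_i,& E_i\in T\times\mathcal S,\\ 0,&\text{otherwise},\end{cases} \] where $T\times\mathcal S=\{hg: h\in T,\ g\in\mathcal S\}$ (operators compared up to phase).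
   Context: Pauli errors are tensor products of $I,X,Y,Z$ (phases ignored). $U_E$ is an $n$-qubit Clifford unitary; the code space is $\{U_E(|\psi\rangle\otimes|0\rangle^{\otimes n-k})\}$, stabilized by the abelian group $\mathcal S$ generated by $g_j=U_EZ_{j+k}U_E^\dagger$, $j=1,\dots,n-k$. The error syndrome of a Pauli $E$ is $s\in\{0,1\}^{n-k}$ with $s_j=0$ iff $E$ commutes with $g_j$. Syndrome projectors: $P_s=\prod_{j=1}^{n-k}\frac{I+(-1)^{s_j}g_j}{2}$. A set of syndrome representatives $T$ consists of one Pauli operator $E_s$ with syndrome $s$ for each $s\in\{0,1\}^{n-k}$, with $E_0=I$; the correction for outcome $s$ is $C_s=E_s$. The index $l$ runs over the computational basis of the $n-k$ ancilla qubits. The $n$-qubit depolarizing channel with rate $p$ has Kraus operators $\sqrt{p_i}E_i$, $E_i$ ranging over the $4^n$ Pauli operators, with $p_i=(1-\frac34p)^{n-w}(\frac p4)^w$ where $w$ is the weight (number of non-identity factors) of $E_i$. *)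

theory Defs
  imports "Jordan_Normal_Form.Schur_Decomposition"
begin

datatype pauli1 = PI | PX | PY | PZ

fun pauli1_entry :: "pauli1 \<Rightarrow> nat \<Rightarrow> nat \<Rightarrow> complex" where
  "pauli1_entry PI r c = (if r = c then 1 else 0)"
| "pauli1_entry PX r c = (if r \<noteq> c then 1 else 0)"
| "pauli1_entry PY r c = (if r = 0 \<and> c = 1 then - \<i> else if r = 1 \<and> c = 0 then \<i> else 0)"
| "pauli1_entry PZ r c = (if r = c then (if r = 0 then 1 else -1) else 0)"

text \<open>Bit of computational basis index x for qubit q (0-based); qubit 0 is the
  leftmost tensor factor (most significant bit).\<close>
definition qbit :: "nat \<Rightarrow> nat \<Rightarrow> nat \<Rightarrow> nat" where
  "qbit n q x = (x div 2 ^ (n - 1 - q)) mod 2"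

definition pauli_mat :: "nat \<Rightarrow> pauli1 list \<Rightarrow> complex mat" where
  "pauli_mat n P = mat (2^n) (2^n)
     (\<lambda>(r, c). \<Prod>q<n. pauli1_entry (P ! q) (qbit n q r) (qbit n q c))"

definition pauli_weight :: "pauli1 list \<Rightarrow> nat" where
  "pauli_weight P = length (filter (\<lambda>x. x \<noteq> PI) P)"

definition mtrace :: "complex mat \<Rightarrow> complex" where
  "mtrace A = (\<Sum>i<dim_row A. A $$ (i, i))"

definition unitary_mat :: "nat \<Rightarrow> complex mat \<Rightarrow> bool" where
  "unitary_mat N U \<longleftrightarrow> U \<in> carrier_mat N N \<and> U * mat_adjoint U = 1\<^sub>m N \<and> mat_adjoint U * U = 1\<^sub>m N"

definition clifford :: "nat \<Rightarrow> complex mat \<Rightarrow> bool" where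
  "clifford n U \<longleftrightarrow> unitary_mat (2^n) U \<and>
     (\<forall>P. length P = n \<longrightarrow> (\<exists>c Q. length Q = n \<and>
         U * pauli_mat n P * mat_adjoint U = c \<cdot>\<^sub>m pauli_mat n Q))"

definition Z_on :: "nat \<Rightarrow> nat \<Rightarrow> complex mat" where
  "Z_on n q = pauli_mat n ((replicate n PI)[q := PZ])"

text \<open>Stabilizer generator g_{j+1} = U Z_{j+1+k} U^dagger, for 0-based j < n-k.\<close>
definition stab_gen :: "nat \<Rightarrow> nat \<Rightarrow> complex mat \<Rightarrow> nat \<Rightarrow> complex mat" where
  "stab_gen n k U j = U * Z_on n (k + j) * mat_adjoint U"

inductive_set stab_group :: "nat \<Rightarrow> nat \<Rightarrow> complex mat \<Rightarrow> complex mat set"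
  for n k U where
  one: "1\<^sub>m (2^n) \<in> stab_group n k U"
| gen: "j < n - k \<Longrightarrow> stab_gen n k U j \<in> stab_group n k U"
| mult: "a \<in> stab_group n k U \<Longrightarrow> b \<in> stab_group n k U \<Longrightarrow> a * b \<in> stab_group n k U"

text \<open>Syndrome (list of length n-k): entry j is True (=1) iff E does not commute with g_{j+1}.\<close>
definition syndrome :: "nat \<Rightarrow> nat \<Rightarrow> complex mat \<Rightarrow> complex mat \<Rightarrow> bool list" where
  "syndrome n k U E = map (\<lambda>j. \<not> (E * stab_gen n k U j = stab_gen n k U j * E)) [0..<n - k]"

definition synd_proj :: "nat \<Rightarrow> nat \<Rightarrow> complex mat \<Rightarrow> bool list \<Rightarrow> complex mat" where
  "synd_proj n k U s = foldr (\<lambda>j M. ((1/2 :: complex) \<cdot>\<^sub>m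
       (1\<^sub>m (2^n) + (if s ! j then -1 else 1) \<cdot>\<^sub>m stab_gen n k U j)) * M)
     [0..<n - k] (1\<^sub>m (2^n))"

definition syndrome_reps :: "nat \<Rightarrow> nat \<Rightarrow> complex mat \<Rightarrow> (bool list \<Rightarrow> pauli1 list) \<Rightarrow> bool" where
  "syndrome_reps n k U T \<longleftrightarrow>
     (\<forall>s. length s = n - k \<longrightarrow> length (T s) = n \<and> syndrome n k U (pauli_mat n (T s)) = s) \<and>
     T (replicate (n - k) False) = replicate n PI"

definition in_TS :: "nat \<Rightarrow> nat \<Rightarrow> complex mat \<Rightarrow> (bool list \<Rightarrow> pauli1 list) \<Rightarrow> pauli1 list \<Rightarrow> bool" where
  "in_TS n k U T E \<longleftrightarrow> (\<exists>s g c. length s = n - k \<and> g \<in> stab_group n k U \<and>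
      pauli_mat n E = c \<cdot>\<^sub>m (pauli_mat n (T s) * g))"

definition depol_prob :: "nat \<Rightarrow> real \<Rightarrow> pauli1 list \<Rightarrow> real" where
  "depol_prob n p E = (1 - 3/4 * p) ^ (n - pauli_weight E) * (p / 4) ^ pauli_weight E"

text \<open>W_{l,E,s} = (I^k (x) <l|) U^dagger C_s P_s sqrt(p_E) E U (I^k (x) |0>^{n-k}), a 2^k x 2^k matrix.\<close>
definition W_op :: "nat \<Rightarrow> nat \<Rightarrow> complex mat \<Rightarrow> (bool list \<Rightarrow> pauli1 list) \<Rightarrow> real \<Rightarrow>
    nat \<Rightarrow> pauli1 list \<Rightarrow> bool list \<Rightarrow> complex mat" where
  "W_op n k U T p l E s =
     (let M = mat_adjoint U * pauli_mat n (T s) * synd_proj n k U s *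
              (complex_of_real (sqrt (depol_prob n p E)) \<cdot>\<^sub>m pauli_mat n E) * U
      in mat (2^k) (2^k) (\<lambda>(a, b). M $$ (a * 2^(n - k) + l, b * 2^(n - k))))"

end

theory Submission
  imports Defs
begin


fun pm :: "pauli1 \<Rightarrow> pauli1 \<Rightarrow> pauli1" where
  "pm PI b = b"
| "pm a PI = a"
| "pm PX PX = PI" | "pm PY PY = PI" | "pm PZ PZ = PI"
| "pm PX PY = PZ" | "pm PY PX = PZ"
| "pm PX PZ = PY" | "pm PZ PX = PY"
| "pm PY PZ = PX" | "pm PZ PY = PX"

fun ph :: "pauli1 \<Rightarrow> pauli1 \<Rightarrow> complex" where
  "ph PX PY = \<i>" | "ph PY PX = - \<i>"
| "ph PX PZ = - \<i>" | "ph PZ PX = \<i>"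
| "ph PY PZ = \<i>" | "ph PZ PY = - \<i>"
| "ph a b = 1"

lemma pm_comm: "pm a b = pm b a"
  by (cases a; cases b; simp)

lemma pm_self: "pm a a = PI" by (cases a; simp)
lemma ph_self: "ph a a = 1" by (cases a; simp)
lemma pm_eq_PI: "pm a b = PI \<longleftrightarrow> a = b" by (cases a; cases b; simp)
lemma cmod_ph: "cmod (ph a b) = 1" by (cases a; cases b; simp)
lemma ph_sign: "ph a b = ph b a \<or> ph a b = - ph b a" by (cases a; cases b; simp)
lemma ph_PI1[simp]: "ph PI a = 1" by (cases a; simp)
lemma ph_PI2[simp]: "ph a PI = 1" by (cases a; simp)
lemma pm_PI2[simp]: "pm a PI = a" by (cases a; simp)

lemma entry_prod:
  assumes "r < 2" "c < 2"
  shows "pauli1_entry a r 0 * pauli1_entry b 0 c + pauli1_entry a r 1 * pauli1_entry b 1 c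
         = ph a b * pauli1_entry (pm a b) r c"
  using assms by (cases a; cases b; auto simp: less_2_cases_iff)

lemma sum_bits_lsb:
  fixes g :: "nat \<Rightarrow> nat \<Rightarrow> 'a::comm_ring_1"
  shows "(\<Sum>x<2^n. \<Prod>i<n. g i (x div 2^i mod 2)) = (\<Prod>i<n. g i 0 + g i 1)"
proof (induction n arbitrary: g)
  case 0 then show ?case by simp
next
  case (Suc n)
  have split: "{..<2^Suc n} = {..<(2::nat)^n} \<union> (\<lambda>y. 2^n + y) ` {..<2^n}" (is "_ = ?A \<union> ?B")
  proof
    show "{..<2 ^ Suc n} \<subseteq> ?A \<union> ?B"
    proof
      fix x assume x: "x \<in> {..<(2::nat)^Suc n}"
      show "x \<in> ?A \<union> ?B"
      proof (cases "x < 2^n")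
        case True then show ?thesis by simp
      next
        case False then have "x = 2^n + (x - 2^n)" "x - 2^n < 2^n" using x by auto
        then show ?thesis by blast
      qed
    qed
  qed auto
  have disj: "?A \<inter> ?B = {}" by auto
  have inj: "inj_on (\<lambda>y. 2^n + y) ?A" by (auto simp: inj_on_def)
  have lo: "x div 2 ^ i mod 2 = (2^n + x) div 2^i mod 2" if "i < n" "x < 2^n" for x i :: nat
  proof -
    have "(2^n + x) div 2^i = 2^(n-i) + x div 2^i"
      using that by (simp add: power_diff div_add1_eq[of "2^n"] le_imp_power_dvd)
    moreover have "even ((2::nat)^(n-i))" using that by simp
    moreover have "((2::nat)^(n-i)) mod 2 = 0" using that by simp
    ultimately show ?thesis by (metis mod_add_left_eq add_0)
  qed
  have hi1: "(2^n + x) div 2^n mod 2 = 1" if "x < 2^n" for x :: nat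
    using that by simp
  have hi0: "x div 2^n mod 2 = 0" if "x < 2^n" for x :: nat
    using that by simp
  have "(\<Sum>x<2^Suc n. \<Prod>i<Suc n. g i (x div 2^i mod 2))
      = (\<Sum>x\<in>?A. \<Prod>i<Suc n. g i (x div 2^i mod 2)) + (\<Sum>x\<in>?B. \<Prod>i<Suc n. g i (x div 2^i mod 2))"
    unfolding split by (rule sum.union_disjoint) (use disj in auto)
  also have "(\<Sum>x\<in>?A. \<Prod>i<Suc n. g i (x div 2^i mod 2)) = (\<Sum>x\<in>?A. \<Prod>i<n. g i (x div 2^i mod 2)) * g n 0"
    by (simp add: sum_distrib_right hi0)
  also have "(\<Sum>x\<in>?B. \<Prod>i<Suc n. g i (x div 2^i mod 2)) = (\<Sum>x\<in>?A. \<Prod>i<Suc n. g i ((2^n + x) div 2^i mod 2))"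
    by (simp add: sum.reindex[OF inj])
  also have "\<dots> = (\<Sum>x\<in>?A. \<Prod>i<n. g i (x div 2^i mod 2)) * g n 1"
    unfolding sum_distrib_right
    by (rule sum.cong) (auto simp: hi1 lo intro!: prod.cong)
  finally show ?case using Suc[of g] by (simp add: algebra_simps)
qed

lemma sum_bits:
  fixes f :: "nat \<Rightarrow> nat \<Rightarrow> 'a::comm_ring_1"
  shows "(\<Sum>x<2^n. \<Prod>q<n. f q (qbit n q x)) = (\<Prod>q<n. f q 0 + f q 1)"
proof -
  have r: "(\<Prod>q<n. h q) = (\<Prod>i<n. h (n - Suc i))" for h :: "nat \<Rightarrow> 'a"
    by (rule prod.nat_diff_reindex[symmetric])
  have "(\<Prod>q<n. f q (qbit n q x)) = (\<Prod>i<n. f (n - Suc i) (x div 2^i mod 2))" for x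
  proof -
    have "(\<Prod>q<n. f q (qbit n q x)) = (\<Prod>i<n. f (n - Suc i) (qbit n (n - Suc i) x))"
      by (rule r)
    also have "\<dots> = (\<Prod>i<n. f (n - Suc i) (x div 2^i mod 2))"
      by (rule prod.cong) (auto simp: qbit_def Suc_diff_Suc)
    finally show ?thesis .
  qed
  then have "(\<Sum>x<2^n. \<Prod>q<n. f q (qbit n q x)) = (\<Prod>i<n. f (n - Suc i) 0 + f (n - Suc i) 1)"
    using sum_bits_lsb[where n=n and g="\<lambda>i b. f (n - Suc i) b"] by simp
  also have "\<dots> = (\<Prod>q<n. f q 0 + f q 1)"
    using r[of "\<lambda>q. f q 0 + f q 1"] by simp
  finally show ?thesis .
qed

lemma qbit_lt2: "qbit n q x < 2" by (simp add: qbit_def)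

lemma bits_eq:
  assumes "r < 2^n" "c < 2^n" "\<forall>q<n. qbit n q r = qbit n q c"
  shows "r = c"
proof -
  have "bit r i = bit c i" for i
  proof (cases "i < n")
    case True
    have "qbit n (n - Suc i) r = qbit n (n - Suc i) c" using assms(3) True by simp
    then have "r div 2^i mod 2 = c div 2^i mod 2" using True by (simp add: qbit_def Suc_diff_Suc)
    then show ?thesis by (simp add: bit_iff_odd odd_iff_mod_2_eq_one)
  next
    case False
    then have "(2::nat)^n \<le> 2^i" by simp
    then have "r < 2^i" "c < 2^i" using assms(1,2) by linarith+
    then show ?thesis by (simp add: bit_iff_odd)
  qed
  then show ?thesis by (simp add: bit_eq_iff)
qed




definition pmul :: "pauli1 list \<Rightarrow> pauli1 list \<Rightarrow> pauli1 list" where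
  "pmul P Q = map (\<lambda>i. pm (P!i) (Q!i)) [0..<length P]"

lemma pmul_len[simp]: "length (pmul P Q) = length P" by (simp add: pmul_def)
lemma pmul_nth[simp]: "i < length P \<Longrightarrow> pmul P Q ! i = pm (P!i) (Q!i)" by (simp add: pmul_def)

lemma pauli_carrier[simp]: "pauli_mat n P \<in> carrier_mat (2^n) (2^n)"
  by (simp add: pauli_mat_def)
lemma pauli_dims[simp]: "dim_row (pauli_mat n P) = 2^n" "dim_col (pauli_mat n P) = 2^n"
  by (simp_all add: pauli_mat_def)

lemma pauli_entry:
  "r < 2^n \<Longrightarrow> c < 2^n \<Longrightarrow>
   pauli_mat n P $$ (r,c) = (\<Prod>q<n. pauli1_entry (P ! q) (qbit n q r) (qbit n q c))"
  by (simp add: pauli_mat_def)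

lemma pauli_mult:
  assumes "length P = n" "length Q = n"
  shows "pauli_mat n P * pauli_mat n Q =
         (\<Prod>q<n. ph (P!q) (Q!q)) \<cdot>\<^sub>m pauli_mat n (pmul P Q)" (is "?A = ?B")
proof (rule eq_matI)
  fix r c assume r: "r < dim_row ?B" and c: "c < dim_col ?B"
  then have r: "r < 2^n" and c: "c < 2^n" by simp_all
  have "(pauli_mat n P * pauli_mat n Q) $$ (r,c)
     = (\<Sum>x<2^n. (\<Prod>q<n. pauli1_entry (P ! q) (qbit n q r) (qbit n q x)) *
                   (\<Prod>q<n. pauli1_entry (Q ! q) (qbit n q x) (qbit n q c)))"
    using r c by (simp add: scalar_prod_def pauli_entry atLeast0LessThan)
  also have "\<dots> = (\<Sum>x<2^n. \<Prod>q<n. (\<lambda>q b. pauli1_entry (P ! q) (qbit n q r) b *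
                   pauli1_entry (Q ! q) b (qbit n q c)) q (qbit n q x))"
    by (simp add: prod.distrib)
  also have "\<dots> = (\<Prod>q<n. pauli1_entry (P ! q) (qbit n q r) 0 * pauli1_entry (Q ! q) 0 (qbit n q c)
          + pauli1_entry (P ! q) (qbit n q r) 1 * pauli1_entry (Q ! q) 1 (qbit n q c))"
    by (rule sum_bits)
  also have "\<dots> = (\<Prod>q<n. ph (P!q) (Q!q) * pauli1_entry (pm (P!q) (Q!q)) (qbit n q r) (qbit n q c))"
    by (intro prod.cong refl entry_prod qbit_lt2)
  also have "\<dots> = ((\<Prod>q<n. ph (P!q) (Q!q)) \<cdot>\<^sub>m pauli_mat n (pmul P Q)) $$ (r,c)"
    using r c assms by (simp add: prod.distrib pauli_entry)
  finally show "?A $$ (r,c) = ?B $$ (r,c)" .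
qed auto

lemma prod_indicator:
  fixes A :: "nat set"
  shows "finite A \<Longrightarrow> (\<Prod>q\<in>A. if B q then (1::complex) else 0) = (if \<forall>q\<in>A. B q then 1 else 0)"
  by (induction A rule: finite_induct) auto

lemma prod_indicator_bits:
  assumes "r < 2^n" "c < 2^n"
  shows "(\<Prod>q<n. if qbit n q r = qbit n q c then (1::complex) else 0) = (if r = c then 1 else 0)"
  using prod_indicator[of "{..<n}" "\<lambda>q. qbit n q r = qbit n q c"] bits_eq[OF assms] by auto

lemma pauli_id: "pauli_mat n (replicate n PI) = 1\<^sub>m (2^n)"
proof (rule eq_matI)
  fix r c assume "r < dim_row (1\<^sub>m (2^n) :: complex mat)" "c < dim_col (1\<^sub>m (2^n) :: complex mat)"
  then have r: "r < 2^n" and c: "c < 2^n" by simp_all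
  have "pauli_mat n (replicate n PI) $$ (r,c) = (\<Prod>q<n. if qbit n q r = qbit n q c then (1::complex) else 0)"
    using r c by (simp add: pauli_entry)
  then show "pauli_mat n (replicate n PI) $$ (r,c) = 1\<^sub>m (2^n) $$ (r,c)"
    using r c prod_indicator_bits[OF r c] by simp
qed auto

lemma pmul_self: "pmul P P = replicate (length P) PI"
  by (rule nth_equalityI) (auto simp: pm_self)

lemma one_smult_mat[simp]: "(1::'a::semiring_1) \<cdot>\<^sub>m A = A"
  by (auto intro!: eq_matI)

lemma pauli_sq: "length P = n \<Longrightarrow> pauli_mat n P * pauli_mat n P = 1\<^sub>m (2^n)"
  by (simp add: pauli_mult pmul_self ph_self pauli_id)

lemma smult_pauli_cancel:
  assumes "length P = n" "c \<cdot>\<^sub>m pauli_mat n P = d \<cdot>\<^sub>m pauli_mat n P"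
  shows "c = d"
proof -
  have "(c \<cdot>\<^sub>m pauli_mat n P) * pauli_mat n P = (d \<cdot>\<^sub>m pauli_mat n P) * pauli_mat n P"
    using assms by simp
  moreover have "(c \<cdot>\<^sub>m pauli_mat n P) * pauli_mat n P = c \<cdot>\<^sub>m (pauli_mat n P * pauli_mat n P)"
    "(d \<cdot>\<^sub>m pauli_mat n P) * pauli_mat n P = d \<cdot>\<^sub>m (pauli_mat n P * pauli_mat n P)"
    by (rule mult_smult_assoc_mat, auto)+
  ultimately have "c \<cdot>\<^sub>m 1\<^sub>m (2^n) = (d \<cdot>\<^sub>m 1\<^sub>m (2^n) :: complex mat)"
    using assms(1) by (simp add: pauli_sq)
  then have "(c \<cdot>\<^sub>m 1\<^sub>m (2^n) :: complex mat) $$ (0,0) = (d \<cdot>\<^sub>m 1\<^sub>m (2^n)) $$ (0,0)" by simp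
  then show ?thesis by simp
qed

lemma mtrace_smult: "A \<in> carrier_mat N N \<Longrightarrow> mtrace (c \<cdot>\<^sub>m A) = c * mtrace A"
  by (auto simp add: mtrace_def sum_distrib_left intro!: sum.cong)

lemma mtrace_one: "mtrace (1\<^sub>m N) = of_nat N"
  by (simp add: mtrace_def)

lemma pauli_trace:
  "mtrace (pauli_mat n R) = (\<Prod>q<n. pauli1_entry (R!q) 0 0 + pauli1_entry (R!q) 1 1)"
proof -
  have "mtrace (pauli_mat n R) = (\<Sum>x<2^n. \<Prod>q<n. (\<lambda>q b. pauli1_entry (R!q) b b) q (qbit n q x))"
    by (simp add: mtrace_def pauli_entry)
  also have "\<dots> = (\<Prod>q<n. pauli1_entry (R!q) 0 0 + pauli1_entry (R!q) 1 1)"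
    by (rule sum_bits)
  finally show ?thesis .
qed

lemma tr1_zero: "a \<noteq> PI \<Longrightarrow> pauli1_entry a 0 0 + pauli1_entry a 1 1 = 0"
  by (cases a) auto

lemma tr1_zero': "a \<noteq> PI \<Longrightarrow> pauli1_entry a 0 0 + pauli1_entry a (Suc 0) (Suc 0) = 0"
  by (cases a) auto

lemma pauli_nonzero_smult:
  assumes "length P = n" "c \<cdot>\<^sub>m pauli_mat n P = 0\<^sub>m (2^n) (2^n)"
  shows "c = 0"
proof -
  have "c \<cdot>\<^sub>m pauli_mat n P = 0 \<cdot>\<^sub>m pauli_mat n P" using assms(2) by (auto intro!: eq_matI)
  then show ?thesis using smult_pauli_cancel[OF assms(1)] by blast
qed

lemma pauli_inj:
  assumes "length P = n" "length Q = n" "pauli_mat n P = c \<cdot>\<^sub>m pauli_mat n Q"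
  shows "P = Q"
proof (rule ccontr)
  assume ne: "P \<noteq> Q"
  have "\<exists>q<n. P!q \<noteq> Q!q"
  proof (rule ccontr)
    assume "\<not> (\<exists>q<n. P!q \<noteq> Q!q)"
    then have "P = Q" using assms(1,2) by (intro nth_equalityI) auto
    then show False using ne by simp
  qed
  then obtain q where q: "q < n" "P!q \<noteq> Q!q" by blast
  have "pauli_mat n P * pauli_mat n Q = (c \<cdot>\<^sub>m pauli_mat n Q) * pauli_mat n Q"
    using assms(3) by simp
  also have "\<dots> = c \<cdot>\<^sub>m (pauli_mat n Q * pauli_mat n Q)"
    by (rule mult_smult_assoc_mat, auto)
  also have "\<dots> = c \<cdot>\<^sub>m 1\<^sub>m (2^n)" using pauli_sq[OF assms(2)] by simp
  finally have X: "pauli_mat n P * pauli_mat n Q = c \<cdot>\<^sub>m 1\<^sub>m (2^n)" .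
  have "(\<Prod>q<n. ph (P!q) (Q!q)) \<cdot>\<^sub>m pauli_mat n (pmul P Q) = c \<cdot>\<^sub>m 1\<^sub>m (2^n)"
    using X pauli_mult[OF assms(1,2)] by simp
  then have "mtrace ((\<Prod>q<n. ph (P!q) (Q!q)) \<cdot>\<^sub>m pauli_mat n (pmul P Q)) = mtrace (c \<cdot>\<^sub>m 1\<^sub>m (2^n))"
    by simp
  moreover have "mtrace (pauli_mat n (pmul P Q)) = 0"
    unfolding pauli_trace
    using q assms by (intro prod_zero) (auto simp: tr1_zero tr1_zero' pm_eq_PI intro!: bexI[of _ q])
  ultimately have "c * 2^n = 0"
    by (simp add: mtrace_smult[of _ "2^n"] mtrace_one)
  then have c0: "c = 0" by simp
  have "pauli_mat n P = 0 \<cdot>\<^sub>m pauli_mat n P"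
  proof (rule eq_matI)
    fix i j assume "i < dim_row (0 \<cdot>\<^sub>m pauli_mat n P :: complex mat)" "j < dim_col (0 \<cdot>\<^sub>m pauli_mat n P :: complex mat)"
    then have ij: "i < 2^n" "j < 2^n" by simp_all
    have "pauli_mat n P $$ (i,j) = (c \<cdot>\<^sub>m pauli_mat n Q) $$ (i,j)" using assms(3) by simp
    then show "pauli_mat n P $$ (i,j) = (0 \<cdot>\<^sub>m pauli_mat n P) $$ (i,j)" using ij c0 by simp
  qed auto
  then have "1 \<cdot>\<^sub>m pauli_mat n P = (0::complex) \<cdot>\<^sub>m pauli_mat n P" by simp
  then have "(1::complex) = 0" using smult_pauli_cancel[OF assms(1)] by blast
  then show False by simp
qed

lemma smult_smult_mat: "a \<cdot>\<^sub>m (b \<cdot>\<^sub>m A) = (a * b :: 'a::semigroup_mult) \<cdot>\<^sub>m A"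
  by (auto intro!: eq_matI simp: mult.assoc)



lemma prod_pm1:
  fixes f :: "nat \<Rightarrow> complex"
  shows "(\<forall>q<n. f q = 1 \<or> f q = -1) \<Longrightarrow> (\<Prod>q<n. f q) = 1 \<or> (\<Prod>q<n. f q) = -1"
  by (induction n) auto

lemma ph_nz: "ph a b \<noteq> 0" using cmod_ph[of a b] by auto

lemma pmul_comm: "length P = length Q \<Longrightarrow> pmul P Q = pmul Q P"
  by (rule nth_equalityI) (auto simp: pm_comm)

lemma pauli_anticomm:
  assumes "length P = n" "length Q = n"
  shows "\<exists>\<sigma>. (\<sigma> = 1 \<or> \<sigma> = -1) \<and> pauli_mat n P * pauli_mat n Q = \<sigma> \<cdot>\<^sub>m (pauli_mat n Q * pauli_mat n P)"
proof -
  define f where "f q = ph (P!q) (Q!q) / ph (Q!q) (P!q)" for q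
  have f: "f q = 1 \<or> f q = -1" for q
    using ph_sign[of "P!q" "Q!q"] ph_nz[of "Q!q" "P!q"] by (auto simp: f_def)
  have "(\<Prod>q<n. ph (P!q) (Q!q)) = (\<Prod>q<n. f q * ph (Q!q) (P!q))"
    by (rule prod.cong) (auto simp: f_def ph_nz)
  also have "\<dots> = (\<Prod>q<n. f q) * (\<Prod>q<n. ph (Q!q) (P!q))" by (simp add: prod.distrib)
  finally have e: "(\<Prod>q<n. ph (P!q) (Q!q)) = (\<Prod>q<n. f q) * (\<Prod>q<n. ph (Q!q) (P!q))" .
  have pc: "pmul P Q = pmul Q P" using assms pmul_comm by simp
  have "pauli_mat n P * pauli_mat n Q = (\<Prod>q<n. ph (P!q) (Q!q)) \<cdot>\<^sub>m pauli_mat n (pmul Q P)"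
    using pauli_mult[OF assms] pc by simp
  also have "\<dots> = (\<Prod>q<n. f q) \<cdot>\<^sub>m ((\<Prod>q<n. ph (Q!q) (P!q)) \<cdot>\<^sub>m pauli_mat n (pmul Q P))"
    unfolding e smult_smult_mat ..
  also have "\<dots> = (\<Prod>q<n. f q) \<cdot>\<^sub>m (pauli_mat n Q * pauli_mat n P)"
    using pauli_mult[OF assms(2,1)] by simp
  finally have "pauli_mat n P * pauli_mat n Q = (\<Prod>q<n. f q) \<cdot>\<^sub>m (pauli_mat n Q * pauli_mat n P)" .
  moreover have "(\<Prod>q<n. f q) = 1 \<or> (\<Prod>q<n. f q) = -1" using prod_pm1[of n f] f by simp
  ultimately show ?thesis by blast
qed



definition Zl :: "nat \<Rightarrow> nat \<Rightarrow> pauli1 list" where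
  "Zl n q = (replicate n PI)[q := PZ]"

lemma Zl_len[simp]: "length (Zl n q) = n" by (simp add: Zl_def)
lemma Z_on_Zl: "Z_on n q = pauli_mat n (Zl n q)" by (simp add: Z_on_def Zl_def)
lemma Zl_nth: "i < n \<Longrightarrow> Zl n q ! i = (if i = q then PZ else PI)" by (simp add: Zl_def)

lemma prod_ph_Zl1:
  assumes "q < n"
  shows "(\<Prod>i<n. ph (P!i) (Zl n q ! i)) = ph (P!q) PZ"
proof -
  have "(\<Prod>i<n. ph (P!i) (Zl n q ! i)) = (\<Prod>i<n. if i = q then ph (P!q) PZ else 1)"
    by (rule prod.cong) (auto simp: Zl_nth)
  also have "\<dots> = ph (P!q) PZ" using assms by (simp add: prod.delta)
  finally show ?thesis .
qed

lemma prod_ph_Zl2: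
  assumes "q < n"
  shows "(\<Prod>i<n. ph (Zl n q ! i) (P!i)) = ph PZ (P!q)"
proof -
  have "(\<Prod>i<n. ph (Zl n q ! i) (P!i)) = (\<Prod>i<n. if i = q then ph PZ (P!q) else 1)"
    by (rule prod.cong) (auto simp: Zl_nth)
  also have "\<dots> = ph PZ (P!q)" using assms by (simp add: prod.delta)
  finally show ?thesis .
qed

lemma Z_on_comm:
  assumes "length P = n" "q < n" "pauli_mat n P * Z_on n q = Z_on n q * pauli_mat n P"
  shows "P!q = PI \<or> P!q = PZ"
proof -
  have pc: "pmul P (Zl n q) = pmul (Zl n q) P" using assms(1) pmul_comm by simp
  have "ph (P!q) PZ \<cdot>\<^sub>m pauli_mat n (pmul (Zl n q) P) = ph PZ (P!q) \<cdot>\<^sub>m pauli_mat n (pmul (Zl n q) P)"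
    using assms(3) pauli_mult[OF assms(1) Zl_len] pauli_mult[OF Zl_len assms(1)] pc
      prod_ph_Zl1[OF assms(2), of P] prod_ph_Zl2[OF assms(2), of P]
    by (simp add: Z_on_Zl)
  then have "ph (P!q) PZ = ph PZ (P!q)" by (rule smult_pauli_cancel[rotated]) simp
  then show ?thesis by (cases "P!q") auto
qed

lemma mult_unit_vec:
  fixes A :: "complex mat"
  assumes A: "A \<in> carrier_mat N N" and y: "y < N"
  shows "A *\<^sub>v unit_vec N y = col A y"
proof (rule eq_vecI)
  fix i assume "i < dim_vec (col A y)"
  then have i: "i < N" using A by simp
  have "(A *\<^sub>v unit_vec N y) $ i = row A i \<bullet> unit_vec N y" using i A by simp
  also have "\<dots> = row A i $ y" using y by (rule scalar_prod_right_unit)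
  also have "\<dots> = col A y $ i" using A i y by simp
  finally show "(A *\<^sub>v unit_vec N y) $ i = col A y $ i" .
qed (use A in simp)

lemma Zl_factor:
  assumes "i < n" "qbit n q y = 0"
  shows "pauli1_entry (Zl n q ! i) (qbit n i r) (qbit n i y) = (if qbit n i r = qbit n i y then 1 else 0)"
  using assms by (cases "i = q") (auto simp: Zl_nth)

lemma Z_on_col:
  assumes "q < n" "y < 2^n" "qbit n q y = 0"
  shows "Z_on n q *\<^sub>v unit_vec (2^n) y = unit_vec (2^n) y"
proof (rule eq_vecI)
  fix r assume "r < dim_vec (unit_vec (2^n) y :: complex vec)"
  then have r: "r < 2^n" by simp
  have "(Z_on n q *\<^sub>v unit_vec (2^n) y) $ r = Z_on n q $$ (r, y)"
    using r assms by (simp add: mult_unit_vec Z_on_Zl)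
  also have "\<dots> = (\<Prod>i<n. if qbit n i r = qbit n i y then (1::complex) else 0)"
    unfolding Z_on_Zl using r assms(2)
    by (simp add: pauli_entry Zl_factor[OF _ assms(3)])
  also have "\<dots> = unit_vec (2^n) y $ r" using prod_indicator_bits[OF r assms(2)] r assms(2) by simp
  finally show "(Z_on n q *\<^sub>v unit_vec (2^n) y) $ r = unit_vec (2^n) y $ r" .
qed (simp add: Z_on_Zl)



lemma finite_pauli_lists: "finite {P :: pauli1 list. length P = n}"
proof -
  have u: "(UNIV :: pauli1 set) = {PI, PX, PY, PZ}" by (auto intro: pauli1.exhaust)
  have "finite {xs. set xs \<subseteq> (UNIV :: pauli1 set) \<and> length xs = n}"
    by (rule finite_lists_length_eq) (simp add: u)
  then show ?thesis by simp
qed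

lemma cancel_inv:
  fixes A B :: "complex mat"
  assumes "A \<in> carrier_mat N N" "B \<in> carrier_mat N N" "A * B = 1\<^sub>m N" "a \<cdot>\<^sub>m A = b \<cdot>\<^sub>m A" "0 < N"
  shows "a = b"
proof -
  have e1: "(a \<cdot>\<^sub>m A) * B = a \<cdot>\<^sub>m (A * B)" by (rule mult_smult_assoc_mat) (use assms in auto)
  have e2: "(b \<cdot>\<^sub>m A) * B = b \<cdot>\<^sub>m (A * B)" by (rule mult_smult_assoc_mat) (use assms in auto)
  have "a \<cdot>\<^sub>m (A * B) = b \<cdot>\<^sub>m (A * B)" using e1 e2 assms(4) by metis
  then have "a \<cdot>\<^sub>m 1\<^sub>m N = (b \<cdot>\<^sub>m 1\<^sub>m N :: complex mat)" using assms(3) by simp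
  then have "(a \<cdot>\<^sub>m 1\<^sub>m N :: complex mat) $$ (0,0) = (b \<cdot>\<^sub>m 1\<^sub>m N) $$ (0,0)" by simp
  then show ?thesis using assms(5) by simp
qed

locale cliff =
  fixes n :: nat and U :: "complex mat"
  assumes cl: "clifford n U"
begin

lemma Uc[simp]: "U \<in> carrier_mat (2^n) (2^n)"
  using cl by (simp add: clifford_def unitary_mat_def)
lemma Uac[simp]: "mat_adjoint U \<in> carrier_mat (2^n) (2^n)"
proof -
  have "dim_row U = 2^n" "dim_col U = 2^n" using carrier_matD[OF Uc] by simp_all
  then show ?thesis unfolding mat_adjoint_def carrier_mat_def by simp
qed
lemma UUa[simp]: "U * mat_adjoint U = 1\<^sub>m (2^n)"
  using cl by (simp add: clifford_def unitary_mat_def)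
lemma UaU[simp]: "mat_adjoint U * U = 1\<^sub>m (2^n)"
  using cl by (simp add: clifford_def unitary_mat_def)

lemma mc[simp]: "A \<in> carrier_mat (2^n) (2^n) \<Longrightarrow> B \<in> carrier_mat (2^n) (2^n) \<Longrightarrow> A * B \<in> carrier_mat (2^n) (2^n)"
  by (rule mult_carrier_mat)

lemma r1[simp]: "A \<in> carrier_mat (2^n) (2^n) \<Longrightarrow> A * 1\<^sub>m (2^n) = (A :: complex mat)"
  by (rule right_mult_one_mat)
lemma l1[simp]: "A \<in> carrier_mat (2^n) (2^n) \<Longrightarrow> 1\<^sub>m (2^n) * A = (A :: complex mat)"
  by (rule left_mult_one_mat)

lemmas asc = assoc_mult_mat[of _ "2^n" "2^n" _ "2^n" _ "2^n"]

lemma sm1: fixes A B :: "complex mat" shows "A \<in> carrier_mat (2^n) (2^n) \<Longrightarrow> B \<in> carrier_mat (2^n) (2^n) \<Longrightarrow> (c \<cdot>\<^sub>m A) * B = c \<cdot>\<^sub>m (A * B)"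
  by (rule mult_smult_assoc_mat)
lemma sm2: fixes A B :: "complex mat" shows "A \<in> carrier_mat (2^n) (2^n) \<Longrightarrow> B \<in> carrier_mat (2^n) (2^n) \<Longrightarrow> A * (c \<cdot>\<^sub>m B) = c \<cdot>\<^sub>m (A * B)"
  by (rule mult_smult_distrib)

lemma c1[simp]: "X \<in> carrier_mat (2^n) (2^n) \<Longrightarrow> mat_adjoint U * (U * X) = X"
proof -
  assume X: "X \<in> carrier_mat (2^n) (2^n)"
  have "mat_adjoint U * (U * X) = (mat_adjoint U * U) * X" by (rule asc[OF Uac Uc X, symmetric])
  also have "\<dots> = X" using X by simp
  finally show ?thesis .
qed
lemma c2[simp]: "X \<in> carrier_mat (2^n) (2^n) \<Longrightarrow> U * (mat_adjoint U * X) = X"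
proof -
  assume X: "X \<in> carrier_mat (2^n) (2^n)"
  have "U * (mat_adjoint U * X) = (U * mat_adjoint U) * X" by (rule asc[OF Uc Uac X, symmetric])
  also have "\<dots> = X" using X by simp
  finally show ?thesis .
qed

lemma psq2[simp]: "length P = n \<Longrightarrow> X \<in> carrier_mat (2^n) (2^n) \<Longrightarrow> pauli_mat n P * (pauli_mat n P * X) = X"
proof -
  assume P: "length P = n" and X: "X \<in> carrier_mat (2^n) (2^n)"
  have "pauli_mat n P * (pauli_mat n P * X) = (pauli_mat n P * pauli_mat n P) * X" by (rule asc[OF pauli_carrier pauli_carrier X, symmetric])
  also have "\<dots> = X" using X P by (simp add: pauli_sq)
  finally show ?thesis .
qed

lemma conj_mult:
  assumes "A \<in> carrier_mat (2^n) (2^n)" "B \<in> carrier_mat (2^n) (2^n)"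
  shows "(U * A * mat_adjoint U) * (U * B * mat_adjoint U) = U * (A * B) * mat_adjoint U"
  using assms by (simp add: asc)

lemma conjinv_mult:
  assumes "A \<in> carrier_mat (2^n) (2^n)" "B \<in> carrier_mat (2^n) (2^n)"
  shows "(mat_adjoint U * A * U) * (mat_adjoint U * B * U) = mat_adjoint U * (A * B) * U"
  using assms by (simp add: asc)

lemma conj_smult:
  assumes "A \<in> carrier_mat (2^n) (2^n)"
  shows "U * (c \<cdot>\<^sub>m A) * mat_adjoint U = c \<cdot>\<^sub>m (U * A * mat_adjoint U)"
    "mat_adjoint U * (c \<cdot>\<^sub>m A) * U = c \<cdot>\<^sub>m (mat_adjoint U * A * U)"
  using assms by (simp_all add: sm1 sm2)

lemma conj_back:
  assumes "A \<in> carrier_mat (2^n) (2^n)"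
  shows "mat_adjoint U * (U * A * mat_adjoint U) * U = A"
    "U * (mat_adjoint U * A * U) * mat_adjoint U = A"
  using assms by (simp_all add: asc)

lemma one_ne: "(1::complex) \<cdot>\<^sub>m 1\<^sub>m (2^n) = c \<cdot>\<^sub>m 1\<^sub>m (2^n) \<Longrightarrow> c = 1"
proof -
  assume "(1::complex) \<cdot>\<^sub>m 1\<^sub>m (2^n) = c \<cdot>\<^sub>m 1\<^sub>m (2^n)"
  then have "((1::complex) \<cdot>\<^sub>m 1\<^sub>m (2^n)) $$ (0,0) = (c \<cdot>\<^sub>m 1\<^sub>m (2^n)) $$ (0,0)" by simp
  then show ?thesis by simp
qed

lemma conj_sq:
  assumes "length P = n" "length Q = n" "U * pauli_mat n P * mat_adjoint U = c \<cdot>\<^sub>m pauli_mat n Q"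
  shows "c * c = 1"
proof -
  have "(U * pauli_mat n P * mat_adjoint U) * (U * pauli_mat n P * mat_adjoint U) = 1\<^sub>m (2^n)"
    using assms(1) by (simp add: asc)
  moreover have "(c \<cdot>\<^sub>m pauli_mat n Q) * (c \<cdot>\<^sub>m pauli_mat n Q) = (c * c) \<cdot>\<^sub>m 1\<^sub>m (2^n)"
    using assms(2) by (simp add: sm1 sm2 pauli_sq smult_smult_mat)
  ultimately have "(1::complex) \<cdot>\<^sub>m 1\<^sub>m (2^n) = (c * c) \<cdot>\<^sub>m 1\<^sub>m (2^n)" using assms(3) by simp
  then show ?thesis by (rule one_ne[symmetric, THEN sym]) 
qed

end


lemma smult_mat_vec:
  fixes A :: "complex mat"
  assumes dw: "dim_vec w = dim_col A"
  shows "(c \<cdot>\<^sub>m A) *\<^sub>v w = c \<cdot>\<^sub>v (A *\<^sub>v w)"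
proof (rule eq_vecI)
  fix i assume "i < dim_vec (c \<cdot>\<^sub>v (A *\<^sub>v w))"
  then have i: "i < dim_row A" by simp
  have "((c \<cdot>\<^sub>m A) *\<^sub>v w) $ i = row (c \<cdot>\<^sub>m A) i \<bullet> w" using i by simp
  also have "row (c \<cdot>\<^sub>m A) i = c \<cdot>\<^sub>v row A i" using i by (rule row_smult)
  also have "(c \<cdot>\<^sub>v row A i) \<bullet> w = c * (row A i \<bullet> w)"
    by (rule scalar_prod_smult_left) (use dw in simp)
  finally show "((c \<cdot>\<^sub>m A) *\<^sub>v w) $ i = (c \<cdot>\<^sub>v (A *\<^sub>v w)) $ i" using i by simp
qed simp

context cliff begin

lemma cliff_fwd: "length P = n \<Longrightarrow> \<exists>c Q. length Q = n \<and> U * pauli_mat n P * mat_adjoint U = c \<cdot>\<^sub>m pauli_mat n Q"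
  using cl by (simp add: clifford_def)

lemma backc:
  assumes "U * pauli_mat n P * mat_adjoint U = c \<cdot>\<^sub>m pauli_mat n Q"
  shows "pauli_mat n P = c \<cdot>\<^sub>m (mat_adjoint U * pauli_mat n Q * U)"
proof -
  have "pauli_mat n P = mat_adjoint U * (U * pauli_mat n P * mat_adjoint U) * U"
    using conj_back(1)[of "pauli_mat n P"] by simp
  also have "\<dots> = mat_adjoint U * (c \<cdot>\<^sub>m pauli_mat n Q) * U" using assms by simp
  also have "\<dots> = c \<cdot>\<^sub>m (mat_adjoint U * pauli_mat n Q * U)" by (rule conj_smult(2)) simp
  finally show ?thesis .
qed

lemma cliff_inv:
  assumes "length Q = n"
  shows "\<exists>c P. length P = n \<and> c * c = 1 \<and> mat_adjoint U * pauli_mat n Q * U = c \<cdot>\<^sub>m pauli_mat n P"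
proof -
  define L where "L = {P :: pauli1 list. length P = n}"
  define f where "f P = (SOME Q. length Q = n \<and> (\<exists>c. U * pauli_mat n P * mat_adjoint U = c \<cdot>\<^sub>m pauli_mat n Q))" for P
  have fP: "length (f P) = n \<and> (\<exists>c. U * pauli_mat n P * mat_adjoint U = c \<cdot>\<^sub>m pauli_mat n (f P))"
    if "length P = n" for P
  proof -
    have "\<exists>Q. length Q = n \<and> (\<exists>c. U * pauli_mat n P * mat_adjoint U = c \<cdot>\<^sub>m pauli_mat n Q)"
      using cliff_fwd[OF that] by blast
    then show ?thesis unfolding f_def by (rule someI_ex)
  qed
  have inj: "inj_on f L"
  proof (rule inj_onI)
    fix P1 P2 assume P1: "P1 \<in> L" and P2: "P2 \<in> L" and eq: "f P1 = f P2"
    have l1: "length P1 = n" and l2: "length P2 = n" using P1 P2 L_def by auto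
    obtain c1 where c1: "U * pauli_mat n P1 * mat_adjoint U = c1 \<cdot>\<^sub>m pauli_mat n (f P1)"
      using fP[OF l1] by blast
    obtain c2 where c2: "U * pauli_mat n P2 * mat_adjoint U = c2 \<cdot>\<^sub>m pauli_mat n (f P1)"
      using fP[OF l2] eq by auto
    have s2: "c2 * c2 = 1" using conj_sq[OF l2 _ c2] fP[OF l1] by blast
    define W where "W = mat_adjoint U * pauli_mat n (f P1) * U"
    have e1: "pauli_mat n P1 = c1 \<cdot>\<^sub>m W" using backc[OF c1] W_def by simp
    have e2: "pauli_mat n P2 = c2 \<cdot>\<^sub>m W" using backc[OF c2] W_def by simp
    have w: "c2 \<cdot>\<^sub>m pauli_mat n P2 = W" using e2 s2 by (simp add: smult_smult_mat)
    have "pauli_mat n P1 = c1 \<cdot>\<^sub>m (c2 \<cdot>\<^sub>m pauli_mat n P2)" using e1 w by simp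
    then have "pauli_mat n P1 = (c1 * c2) \<cdot>\<^sub>m pauli_mat n P2" by (simp add: smult_smult_mat)
    then show "P1 = P2" using pauli_inj[OF l1 l2] by blast
  qed
  have sub: "f ` L \<subseteq> L" using fP L_def by auto
  have fin: "finite L" unfolding L_def by (rule finite_pauli_lists)
  have "f ` L = L" by (rule endo_inj_surj[OF fin sub inj])
  then obtain P where P: "length P = n" "f P = Q" using assms L_def by (metis (mono_tags, lifting) imageE mem_Collect_eq)
  obtain c where c: "U * pauli_mat n P * mat_adjoint U = c \<cdot>\<^sub>m pauli_mat n Q" using fP[OF P(1)] P(2) by auto
  have cc: "c * c = 1" using conj_sq[OF P(1) assms c] .
  have "pauli_mat n P = c \<cdot>\<^sub>m (mat_adjoint U * pauli_mat n Q * U)" by (rule backc[OF c])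
  then have "c \<cdot>\<^sub>m pauli_mat n P = mat_adjoint U * pauli_mat n Q * U" using cc by (simp add: smult_smult_mat)
  then show ?thesis using P(1) cc by metis
qed

end

locale code = cliff +
  fixes k :: nat
  assumes kn: "k \<le> n"
begin

lemma gen_form: "j < n - k \<Longrightarrow> stab_gen n k U j = U * pauli_mat n (Zl n (k+j)) * mat_adjoint U"
  by (simp add: stab_gen_def Z_on_Zl)

lemma gen_carrier[simp]: "stab_gen n k U j \<in> carrier_mat (2^n) (2^n)"
  by (simp add: stab_gen_def Z_on_Zl)

lemma syndrome_len[simp]: "length (syndrome n k U A) = n - k"
  by (simp add: syndrome_def)

lemma syndrome_nth: "j < n - k \<Longrightarrow> syndrome n k U A ! j = (\<not> (A * stab_gen n k U j = stab_gen n k U j * A))"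
  by (simp add: syndrome_def)

lemma g_sq: "j < n - k \<Longrightarrow> stab_gen n k U j * stab_gen n k U j = 1\<^sub>m (2^n)"
  using kn by (simp add: gen_form conj_mult pauli_sq)

lemma sign_comm:
  assumes F: "length F = n" and j: "j < n - k"
  shows "pauli_mat n F * stab_gen n k U j =
         (if syndrome n k U (pauli_mat n F) ! j then -1 else 1) \<cdot>\<^sub>m (stab_gen n k U j * pauli_mat n F)"
proof -
  let ?g = "stab_gen n k U j"
  obtain c Q where Q: "length Q = n" "?g = c \<cdot>\<^sub>m pauli_mat n Q"
    using cliff_fwd[of "Zl n (k+j)"] gen_form[OF j] by auto
  obtain \<sigma> where sg: "\<sigma> = 1 \<or> \<sigma> = -1" "pauli_mat n F * pauli_mat n Q = \<sigma> \<cdot>\<^sub>m (pauli_mat n Q * pauli_mat n F)"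
    using pauli_anticomm[OF F Q(1)] by blast
  have e: "pauli_mat n F * ?g = \<sigma> \<cdot>\<^sub>m (?g * pauli_mat n F)"
    unfolding Q(2) using sg(2) by (simp add: sm1 sm2 smult_smult_mat mult.commute)
  have inv: "(?g * pauli_mat n F) * (pauli_mat n F * ?g) = 1\<^sub>m (2^n)"
    using F j by (simp add: asc g_sq)
  show ?thesis
  proof (cases "\<sigma> = 1")
    case True
    then have "pauli_mat n F * ?g = ?g * pauli_mat n F" using e by simp
    then show ?thesis using syndrome_nth[OF j] by simp
  next
    case False
    then have s: "\<sigma> = -1" using sg(1) by simp
    have "\<not> (pauli_mat n F * ?g = ?g * pauli_mat n F)"
    proof
      assume comm: "pauli_mat n F * ?g = ?g * pauli_mat n F"
      then have "1 \<cdot>\<^sub>m (?g * pauli_mat n F) = (-1) \<cdot>\<^sub>m (?g * pauli_mat n F)" using e s by simp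
      then have "(1::complex) = -1" by (rule cancel_inv[OF _ _ inv, rotated 2]) simp_all
      then show False by simp
    qed
    then show ?thesis using syndrome_nth[OF j] e s by simp
  qed
qed

end


lemma ph_IZ: "a \<in> {PI,PZ} \<Longrightarrow> b \<in> {PI,PZ} \<Longrightarrow> ph a b = 1" by auto
lemma pm_IZ: "a \<in> {PI,PZ} \<Longrightarrow> b \<in> {PI,PZ} \<Longrightarrow> pm a b \<in> {PI,PZ}" by auto

context code begin

definition Dset :: "pauli1 list set" where
  "Dset = {D. length D = n \<and> (\<forall>q<k. D!q = PI) \<and> (\<forall>q<n. D!q \<in> {PI, PZ})}"

lemma Dset_len: "D \<in> Dset \<Longrightarrow> length D = n" by (simp add: Dset_def)

lemma pauli_D_mult:
  assumes "D1 \<in> Dset" "D2 \<in> Dset"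
  shows "pauli_mat n D1 * pauli_mat n D2 = pauli_mat n (pmul D1 D2)" "pmul D1 D2 \<in> Dset"
proof -
  have l: "length D1 = n" "length D2 = n" using assms by (auto simp: Dset_def)
  have "(\<Prod>q<n. ph (D1!q) (D2!q)) = (\<Prod>q<n. 1)"
    by (rule prod.cong) (use assms in \<open>auto simp: Dset_def intro!: ph_IZ\<close>)
  then show "pauli_mat n D1 * pauli_mat n D2 = pauli_mat n (pmul D1 D2)"
    using pauli_mult[OF l] by simp
  show "pmul D1 D2 \<in> Dset" unfolding Dset_def
  proof (intro CollectI conjI allI impI)
    show "length (pmul D1 D2) = n" using l by simp
  next
    fix q assume q: "q < k"
    then show "pmul D1 D2 ! q = PI" using assms l kn by (simp add: Dset_def)
  next
    fix q assume q: "q < n"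
    have a: "D1!q = PI \<or> D1!q = PZ" "D2!q = PI \<or> D2!q = PZ" using assms q by (auto simp: Dset_def)
    show "pmul D1 D2 ! q \<in> {PI,PZ}" using a q l by auto
  qed
qed

lemma D_comm:
  assumes "D1 \<in> Dset" "D2 \<in> Dset"
  shows "pauli_mat n D1 * pauli_mat n D2 = pauli_mat n D2 * pauli_mat n D1"
  using pauli_D_mult(1)[OF assms] pauli_D_mult(1)[OF assms(2,1)] pmul_comm[of D1 D2]
    Dset_len[OF assms(1)] Dset_len[OF assms(2)] by simp

lemma one_conj: "U * 1\<^sub>m (2^n) * mat_adjoint U = 1\<^sub>m (2^n)" by simp

lemma stab_D: "g \<in> stab_group n k U \<Longrightarrow> \<exists>D\<in>Dset. g = U * pauli_mat n D * mat_adjoint U"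
proof (induction rule: stab_group.induct)
  case one
  have "replicate n PI \<in> Dset" using kn by (simp add: Dset_def)
  then show ?case using one_conj pauli_id by metis
next
  case (gen j)
  have "Zl n (k+j) \<in> Dset" using gen by (auto simp: Dset_def Zl_nth)
  then show ?case using gen_form[OF gen] by blast
next
  case (mult a b)
  then obtain D1 D2 where D: "D1 \<in> Dset" "D2 \<in> Dset" "a = U * pauli_mat n D1 * mat_adjoint U"
    "b = U * pauli_mat n D2 * mat_adjoint U" by blast
  have "a * b = U * pauli_mat n (pmul D1 D2) * mat_adjoint U"
    using D by (simp add: conj_mult pauli_D_mult)
  then show ?case using pauli_D_mult(2)[OF D(1,2)] by blast
qed

lemma D_stab_aux:
  "\<forall>D. D \<in> Dset \<and> (\<forall>q. k + t \<le> q \<and> q < n \<longrightarrow> D!q = PI) \<longrightarrow> U * pauli_mat n D * mat_adjoint U \<in> stab_group n k U"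
proof (induction t)
  case 0
  show ?case
  proof (intro allI impI)
    fix D assume D: "D \<in> Dset \<and> (\<forall>q. k + 0 \<le> q \<and> q < n \<longrightarrow> D!q = PI)"
    have "D = replicate n PI"
    proof (rule nth_equalityI)
      show "length D = length (replicate n PI)" using D by (simp add: Dset_def)
      fix i assume "i < length D"
      then show "D!i = replicate n PI ! i" using D by (cases "i < k") (auto simp: Dset_def)
    qed
    then show "U * pauli_mat n D * mat_adjoint U \<in> stab_group n k U"
      using one_conj pauli_id stab_group.one by metis
  qed
next
  case (Suc t)
  show ?case
  proof (intro allI impI)
    fix D assume D: "D \<in> Dset \<and> (\<forall>q. k + Suc t \<le> q \<and> q < n \<longrightarrow> D!q = PI)"
    have len: "length D = n" using D by (simp add: Dset_def)
    show "U * pauli_mat n D * mat_adjoint U \<in> stab_group n k U"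
    proof (cases "k + t < n")
      case False
      then have "\<forall>q. k + t \<le> q \<and> q < n \<longrightarrow> D!q = PI" by auto
      then show ?thesis using Suc D by blast
    next
      case True
      define D' where "D' = D[k+t := PI]"
      have D'D: "D' \<in> Dset" unfolding Dset_def
      proof (intro CollectI conjI allI impI)
        show "length D' = n" using len by (simp add: D'_def)
      next
        fix q assume "q < k" then show "D'!q = PI" using D len by (cases "q = k+t") (auto simp: Dset_def D'_def)
      next
        fix q assume q: "q < n"
        have "D!q = PI \<or> D!q = PZ" using D q by (auto simp: Dset_def)
        then show "D'!q \<in> {PI,PZ}" using q len by (cases "q = k+t") (auto simp: D'_def)
      qed
      have D't: "\<forall>q. k + t \<le> q \<and> q < n \<longrightarrow> D'!q = PI"
      proof (intro allI impI)
        fix q assume q: "k + t \<le> q \<and> q < n"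
        show "D'!q = PI"
        proof (cases "q = k + t")
          case True then show ?thesis using q len by (simp add: D'_def)
        next
          case False then show ?thesis using q len D by (simp add: D'_def)
        qed
      qed
      have IH: "U * pauli_mat n D' * mat_adjoint U \<in> stab_group n k U" using Suc D'D D't by blast
      have lD': "length D' = n" using len by (simp add: D'_def)
      show ?thesis
      proof (cases "D!(k+t) = PI")
        case True
        then have "D' = D" unfolding D'_def by (metis list_update_id)
        then show ?thesis using IH by simp
      next
        case False
        then have Z: "D!(k+t) = PZ" using D True by (auto simp: Dset_def)
        have ph1: "(\<Prod>i<n. ph (D'!i) (Zl n (k+t) ! i)) = 1"
          using prod_ph_Zl1[OF True, of D'] lD' True by (simp add: D'_def)
        have pm: "pmul D' (Zl n (k+t)) = D"
        proof (rule nth_equalityI)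
          show "length (pmul D' (Zl n (k + t))) = length D" using lD' len by simp
          fix i assume "i < length (pmul D' (Zl n (k + t)))"
          then have i: "i < n" using lD' by simp
          then show "pmul D' (Zl n (k + t)) ! i = D ! i"
            using lD' Z by (auto simp: D'_def Zl_nth nth_list_update)
        qed
        have "pauli_mat n D = pauli_mat n D' * pauli_mat n (Zl n (k+t))"
          using pauli_mult[OF lD' Zl_len] ph1 pm by simp
        then have "U * pauli_mat n D * mat_adjoint U =
            (U * pauli_mat n D' * mat_adjoint U) * (U * pauli_mat n (Zl n (k+t)) * mat_adjoint U)"
          by (simp add: conj_mult)
        also have "\<dots> = (U * pauli_mat n D' * mat_adjoint U) * stab_gen n k U t"
          using gen_form[of t] True by simp
        finally show ?thesis using IH True stab_group.gen[of t n k U] stab_group.mult by simp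
      qed
    qed
  qed
qed

lemma D_stab: "D \<in> Dset \<Longrightarrow> U * pauli_mat n D * mat_adjoint U \<in> stab_group n k U"
  using D_stab_aux[of "n"] by auto

end


lemma qbit_hi:
  assumes "q < k" "l < 2^m" "n = k + m"
  shows "qbit n q (a * 2^m + l) = qbit k q a"
proof -
  have e: "n - 1 - q = m + (k - 1 - q)" using assms by simp
  have "(a * 2^m + l) div 2^m = a" using assms(2) by simp
  then have "(a * 2^m + l) div 2^(n - 1 - q) = a div 2^(k - 1 - q)"
    unfolding e power_add by (simp add: div_mult2_eq)
  then show ?thesis by (simp add: qbit_def)
qed

lemma qbit_lo:
  assumes "j < m" "l < 2^m" "n = k + m"
  shows "qbit n (k + j) (a * 2^m + l) = qbit m j l"
proof -
  define e where "e = m - 1 - j"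
  have e1: "n - 1 - (k + j) = e" "m - 1 - j = e" using assms by (simp_all add: e_def)
  have em: "e < m" using assms e_def by simp
  have "a * 2^m = (a * 2^(m - e)) * 2^e" using em by (simp add: power_add[symmetric])
  then have "(a * 2^m + l) div 2^e = (l + (a * 2^(m - e)) * 2^e) div 2^e" by (metis add.commute)
  also have "\<dots> = a * 2^(m - e) + l div 2^e" by (rule div_mult_self1) simp
  finally have "(a * 2^m + l) div 2^e = a * 2^(m - e) + l div 2^e" .
  moreover have "(a * 2^(m - e)) mod 2 = (0::nat)" using em by simp
  ultimately have "(a * 2^m + l) div 2^e mod 2 = l div 2^e mod 2" by (metis mod_add_left_eq add_0)
  then show ?thesis unfolding qbit_def e1 .
qed

lemma qbit_hi0: "q < k \<Longrightarrow> n = k + m \<Longrightarrow> qbit n q (a * 2^m) = qbit k q a"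
  using qbit_hi[of q k 0 m n a] by simp

lemma qbit_lo0: "j < m \<Longrightarrow> n = k + m \<Longrightarrow> qbit n (k + j) (a * 2^m) = 0"
  using qbit_lo[of j m 0 n k a] by (simp add: qbit_def)

lemma prod_split:
  fixes f :: "nat \<Rightarrow> 'a::comm_monoid_mult"
  shows "(\<Prod>q<k + m. f q) = (\<Prod>q<k. f q) * (\<Prod>j<m. f (k + j))"
  by (induction m) (simp_all add: mult.assoc)

lemma idx_bound:
  assumes "a < 2^k" "l < 2^m"
  shows "a * 2^m + l < (2::nat)^(k + m)"
proof -
  have "a * 2^m + l < (a + 1) * 2^m" using assms by simp
  also have "\<dots> \<le> 2^k * 2^m" using assms by (intro mult_right_mono) auto
  finally show ?thesis by (simp add: power_add)
qed

definition tr1 :: "pauli1 \<Rightarrow> complex" where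
  "tr1 a = pauli1_entry a 0 0 + pauli1_entry a 1 1"

lemma block_sum:
  assumes "length P = k + m" "\<forall>j<m. P!(k+j) = PI \<or> P!(k+j) = PZ" "l < 2^m"
  shows "(\<Sum>a<2^k. pauli_mat (k+m) P $$ (a * 2^m + l, a * 2^m)) = (if l = 0 then \<Prod>q<k. tr1 (P!q) else 0)"
proof -
  define C where "C = (\<Prod>j<m. pauli1_entry (P!(k+j)) (qbit m j l) 0)"
  have C: "C = (if l = 0 then 1 else 0)"
  proof (cases "l = 0")
    case True
    have "C = (\<Prod>j<m. 1)" unfolding C_def
      by (rule prod.cong) (use assms(2) True in \<open>auto simp: qbit_def\<close>)
    then show ?thesis using True by simp
  next
    case False
    have "\<exists>j<m. qbit m j l \<noteq> qbit m j 0"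
      using bits_eq[of l m 0] assms(3) False by auto
    then obtain j where j: "j < m" "qbit m j l \<noteq> 0" by (auto simp: qbit_def)
    then have "qbit m j l = 1" using qbit_lt2[of m j l] by linarith
    then have "pauli1_entry (P!(k+j)) (qbit m j l) 0 = 0" using assms(2) j(1) by auto
    then have "C = 0" unfolding C_def using j(1) by (intro prod_zero) auto
    then show ?thesis using False by simp
  qed
  have ent: "pauli_mat (k+m) P $$ (a * 2^m + l, a * 2^m)
      = (\<Prod>q<k. (\<lambda>q b. pauli1_entry (P!q) b b) q (qbit k q a)) * C" if a: "a < 2^k" for a
  proof -
    have b1: "a * 2^m + l < 2^(k+m)" using idx_bound[OF a assms(3)] .
    have b2: "a * 2^m + 0 < 2^(k+m)" using idx_bound[OF a, of 0 m] by simp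
    have "pauli_mat (k+m) P $$ (a * 2^m + l, a * 2^m)
        = (\<Prod>q<k+m. pauli1_entry (P ! q) (qbit (k+m) q (a * 2^m + l)) (qbit (k+m) q (a * 2^m + 0)))"
      using b1 b2 by (simp add: pauli_entry)
    also have "\<dots> = (\<Prod>q<k. pauli1_entry (P ! q) (qbit (k+m) q (a * 2^m + l)) (qbit (k+m) q (a * 2^m + 0)))
       * (\<Prod>j<m. pauli1_entry (P ! (k+j)) (qbit (k+m) (k+j) (a * 2^m + l)) (qbit (k+m) (k+j) (a * 2^m + 0)))"
      by (rule prod_split)
    also have "(\<Prod>q<k. pauli1_entry (P ! q) (qbit (k+m) q (a * 2^m + l)) (qbit (k+m) q (a * 2^m + 0)))
       = (\<Prod>q<k. pauli1_entry (P ! q) (qbit k q a) (qbit k q a))"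
      by (rule prod.cong) (use assms(3) in \<open>simp_all add: qbit_hi qbit_hi0\<close>)
    also have "(\<Prod>j<m. pauli1_entry (P ! (k+j)) (qbit (k+m) (k+j) (a * 2^m + l)) (qbit (k+m) (k+j) (a * 2^m + 0)))
       = C"
      unfolding C_def by (rule prod.cong) (use assms(3) in \<open>simp_all add: qbit_lo qbit_lo0\<close>)
    finally show ?thesis by simp
  qed
  have "(\<Sum>a<2^k. pauli_mat (k+m) P $$ (a * 2^m + l, a * 2^m))
      = (\<Sum>a<2^k. (\<Prod>q<k. (\<lambda>q b. pauli1_entry (P!q) b b) q (qbit k q a)) * C)"
    by (rule sum.cong) (simp_all add: ent)
  also have "\<dots> = (\<Sum>a<2^k. (\<Prod>q<k. (\<lambda>q b. pauli1_entry (P!q) b b) q (qbit k q a))) * C"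
    by (simp add: sum_distrib_right)
  also have "\<dots> = (\<Prod>q<k. tr1 (P!q)) * C"
    using sum_bits[where n=k and f="\<lambda>q b. pauli1_entry (P!q) b b"] unfolding tr1_def by simp
  finally show ?thesis using C by simp
qed



context code begin

lemma gen_dims[simp]: "dim_row (stab_gen n k U j) = 2^n" "dim_col (stab_gen n k U j) = 2^n"
  using carrier_matD[OF gen_carrier[of j]] by simp_all

lemma factor_fix:
  assumes w: "w \<in> carrier_vec (2^n)" and j: "j < n - k"
    and sg: "\<sigma> * \<sigma> = 1"
    and hw: "stab_gen n k U j *\<^sub>v w = \<sigma> \<cdot>\<^sub>v w"
  shows "((1/2 :: complex) \<cdot>\<^sub>m (1\<^sub>m (2^n) + \<sigma> \<cdot>\<^sub>m stab_gen n k U j)) *\<^sub>v w = w"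
proof -
  have d: "dim_vec w = 2^n" using w by simp
  have "((1/2 :: complex) \<cdot>\<^sub>m (1\<^sub>m (2^n) + \<sigma> \<cdot>\<^sub>m stab_gen n k U j)) *\<^sub>v w
      = (1/2) \<cdot>\<^sub>v ((1\<^sub>m (2^n) + \<sigma> \<cdot>\<^sub>m stab_gen n k U j) *\<^sub>v w)"
    by (rule smult_mat_vec) (simp add: d)
  also have "(1\<^sub>m (2^n) + \<sigma> \<cdot>\<^sub>m stab_gen n k U j) *\<^sub>v w = 1\<^sub>m (2^n) *\<^sub>v w + (\<sigma> \<cdot>\<^sub>m stab_gen n k U j) *\<^sub>v w"
    by (rule add_mult_distrib_mat_vec) (use w in auto)
  also have "(\<sigma> \<cdot>\<^sub>m stab_gen n k U j) *\<^sub>v w = \<sigma> \<cdot>\<^sub>v (stab_gen n k U j *\<^sub>v w)"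
    by (rule smult_mat_vec) (simp add: d)
  also have "1\<^sub>m (2^n) *\<^sub>v w = w" using w by simp
  finally have e: "((1/2 :: complex) \<cdot>\<^sub>m (1\<^sub>m (2^n) + \<sigma> \<cdot>\<^sub>m stab_gen n k U j)) *\<^sub>v w
      = (1/2) \<cdot>\<^sub>v (w + \<sigma> \<cdot>\<^sub>v (\<sigma> \<cdot>\<^sub>v w))" using hw by simp
  show ?thesis unfolding e
  proof (rule eq_vecI)
    fix i assume "i < dim_vec w"
    then show "((1/2) \<cdot>\<^sub>v (w + \<sigma> \<cdot>\<^sub>v (\<sigma> \<cdot>\<^sub>v w))) $ i = w $ i"
      using sg by (simp add: mult.assoc[symmetric])
  qed simp
qed

lemma foldr_fix:
  assumes w: "w \<in> carrier_vec (2^n)"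
    and hw: "\<forall>j<n-k. stab_gen n k U j *\<^sub>v w = (if s!j then -1 else 1) \<cdot>\<^sub>v w"
  shows "set js \<subseteq> {..<n-k} \<Longrightarrow>
    foldr (\<lambda>j M. ((1/2 :: complex) \<cdot>\<^sub>m (1\<^sub>m (2^n) + (if s ! j then -1 else 1) \<cdot>\<^sub>m stab_gen n k U j)) * M) js (1\<^sub>m (2^n))
      \<in> carrier_mat (2^n) (2^n) \<and>
    foldr (\<lambda>j M. ((1/2 :: complex) \<cdot>\<^sub>m (1\<^sub>m (2^n) + (if s ! j then -1 else 1) \<cdot>\<^sub>m stab_gen n k U j)) * M) js (1\<^sub>m (2^n)) *\<^sub>v w = w"
proof (induction js)
  case Nil
  then show ?case using w by simp
next
  case (Cons j js)
  let ?F = "(1/2 :: complex) \<cdot>\<^sub>m (1\<^sub>m (2^n) + (if s ! j then -1 else 1) \<cdot>\<^sub>m stab_gen n k U j)"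
  let ?M = "foldr (\<lambda>j M. ((1/2 :: complex) \<cdot>\<^sub>m (1\<^sub>m (2^n) + (if s ! j then -1 else 1) \<cdot>\<^sub>m stab_gen n k U j)) * M) js (1\<^sub>m (2^n))"
  have j: "j < n - k" and IH: "?M \<in> carrier_mat (2^n) (2^n) \<and> ?M *\<^sub>v w = w" using Cons by auto
  have Fc: "?F \<in> carrier_mat (2^n) (2^n)" by simp
  have "(?F * ?M) *\<^sub>v w = ?F *\<^sub>v (?M *\<^sub>v w)"
    by (rule assoc_mult_mat_vec[OF Fc conjunct1[OF IH] w])
  also have "\<dots> = ?F *\<^sub>v w" using IH by simp
  also have "\<dots> = w"
    by (rule factor_fix[OF w j]) (use hw j in auto)
  finally show ?case using Fc IH by simp
qed

lemma proj_fix: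
  assumes w: "w \<in> carrier_vec (2^n)"
    and hw: "\<forall>j<n-k. stab_gen n k U j *\<^sub>v w = (if s!j then -1 else 1) \<cdot>\<^sub>v w"
  shows "synd_proj n k U s \<in> carrier_mat (2^n) (2^n) \<and> synd_proj n k U s *\<^sub>v w = w"
proof -
  have "set [0..<n-k] \<subseteq> {..<n-k}" by auto
  from foldr_fix[OF w hw this] show ?thesis unfolding synd_proj_def .
qed

end


context code begin

lemma Udims[simp]: "dim_row U = 2^n" "dim_col U = 2^n" "dim_row (mat_adjoint U) = 2^n" "dim_col (mat_adjoint U) = 2^n"
  using carrier_matD[OF Uc] carrier_matD[OF Uac] by simp_all

lemma M_col:
  fixes Es E :: "pauli1 list" and cc :: complex
  assumes lE: "length E = n" and lEs: "length Es = n"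
    and y: "y < 2^n" and yb: "\<forall>j<n-k. qbit n (k+j) y = 0" and r: "r < 2^n"
  shows "(mat_adjoint U * pauli_mat n Es * synd_proj n k U (syndrome n k U (pauli_mat n E)) * (cc \<cdot>\<^sub>m pauli_mat n E) * U) $$ (r, y)
        = cc * (mat_adjoint U * (pauli_mat n Es * pauli_mat n E) * U) $$ (r, y)"
proof -
  define s where "s = syndrome n k U (pauli_mat n E)"
  define e :: "complex vec" where "e = unit_vec (2^n) y"
  define v where "v = U *\<^sub>v e"
  define w where "w = pauli_mat n E *\<^sub>v v"
  let ?E = "pauli_mat n E" and ?Es = "pauli_mat n Es"
  have ec: "e \<in> carrier_vec (2^n)" by (simp add: e_def)
  have vc: "v \<in> carrier_vec (2^n)" unfolding v_def by (rule mult_mat_vec_carrier[OF Uc ec])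
  have wc: "w \<in> carrier_vec (2^n)" unfolding w_def by (rule mult_mat_vec_carrier[OF pauli_carrier vc])
  have gv: "stab_gen n k U j *\<^sub>v v = v" if j: "j < n - k" for j
  proof -
    have kj: "k + j < n" using j kn by simp
    have Zc: "Z_on n (k+j) \<in> carrier_mat (2^n) (2^n)" by (simp add: Z_on_Zl)
    have "stab_gen n k U j *\<^sub>v v = (U * Z_on n (k+j) * mat_adjoint U) *\<^sub>v (U *\<^sub>v e)"
      by (simp add: stab_gen_def v_def)
    also have "\<dots> = (U * Z_on n (k+j)) *\<^sub>v (mat_adjoint U *\<^sub>v (U *\<^sub>v e))"
      by (rule assoc_mult_mat_vec) (use Zc vc v_def in auto)
    also have "mat_adjoint U *\<^sub>v (U *\<^sub>v e) = (mat_adjoint U * U) *\<^sub>v e"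
      by (rule assoc_mult_mat_vec[symmetric]) (use ec in auto)
    also have "\<dots> = e" using ec by simp
    also have "(U * Z_on n (k+j)) *\<^sub>v e = U *\<^sub>v (Z_on n (k+j) *\<^sub>v e)"
      by (rule assoc_mult_mat_vec) (use Zc ec in auto)
    also have "Z_on n (k+j) *\<^sub>v e = e"
      unfolding e_def by (rule Z_on_col[OF kj y]) (use yb j in auto)
    finally show ?thesis by (simp add: v_def)
  qed
  have gw: "\<forall>j<n-k. stab_gen n k U j *\<^sub>v w = (if s!j then -1 else 1) \<cdot>\<^sub>v w"
  proof (intro allI impI)
    fix j assume j: "j < n - k"
    let ?g = "stab_gen n k U j" and ?\<sigma> = "(if s!j then -1 else 1) :: complex"
    have sc: "?E * ?g = ?\<sigma> \<cdot>\<^sub>m (?g * ?E)" using sign_comm[OF lE j] s_def by simp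
    have ss: "?\<sigma> * ?\<sigma> = 1" by simp
    have ge: "?g * ?E = ?\<sigma> \<cdot>\<^sub>m (?E * ?g)" using sc ss by (simp add: smult_smult_mat)
    have "?g *\<^sub>v w = (?g * ?E) *\<^sub>v v"
      unfolding w_def by (rule assoc_mult_mat_vec[symmetric]) (use vc in auto)
    also have "\<dots> = ?\<sigma> \<cdot>\<^sub>v ((?E * ?g) *\<^sub>v v)" unfolding ge by (rule smult_mat_vec) (use vc in simp)
    also have "(?E * ?g) *\<^sub>v v = ?E *\<^sub>v (?g *\<^sub>v v)" by (rule assoc_mult_mat_vec) (use vc in auto)
    also have "\<dots> = w" using gv[OF j] by (simp add: w_def)
    finally show "?g *\<^sub>v w = ?\<sigma> \<cdot>\<^sub>v w" .
  qed
  have Ps: "synd_proj n k U s \<in> carrier_mat (2^n) (2^n)" "synd_proj n k U s *\<^sub>v w = w"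
    using proj_fix[OF wc gw] by auto
  define A2 where "A2 = mat_adjoint U * ?Es"
  have A2c: "A2 \<in> carrier_mat (2^n) (2^n)" by (simp add: A2_def)
  define M where "M = A2 * synd_proj n k U s * (cc \<cdot>\<^sub>m ?E) * U"
  have Mc: "M \<in> carrier_mat (2^n) (2^n)" using A2c Ps(1) by (simp add: M_def)
  have "M *\<^sub>v e = (A2 * synd_proj n k U s * (cc \<cdot>\<^sub>m ?E)) *\<^sub>v v"
    unfolding M_def v_def by (rule assoc_mult_mat_vec) (use A2c Ps ec in auto)
  also have "\<dots> = (A2 * synd_proj n k U s) *\<^sub>v ((cc \<cdot>\<^sub>m ?E) *\<^sub>v v)"
    by (rule assoc_mult_mat_vec) (use A2c Ps vc in auto)
  also have "(cc \<cdot>\<^sub>m ?E) *\<^sub>v v = cc \<cdot>\<^sub>v w" unfolding w_def by (rule smult_mat_vec) (use vc in simp)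
  also have "(A2 * synd_proj n k U s) *\<^sub>v (cc \<cdot>\<^sub>v w) = A2 *\<^sub>v (synd_proj n k U s *\<^sub>v (cc \<cdot>\<^sub>v w))"
    by (rule assoc_mult_mat_vec) (use A2c Ps wc in auto)
  also have "synd_proj n k U s *\<^sub>v (cc \<cdot>\<^sub>v w) = cc \<cdot>\<^sub>v (synd_proj n k U s *\<^sub>v w)"
    by (rule mult_mat_vec) (use Ps wc in auto)
  also have "A2 *\<^sub>v (cc \<cdot>\<^sub>v (synd_proj n k U s *\<^sub>v w)) = cc \<cdot>\<^sub>v (A2 *\<^sub>v w)"
    unfolding Ps(2) by (rule mult_mat_vec) (use A2c wc in auto)
  also have "A2 *\<^sub>v w = mat_adjoint U *\<^sub>v (?Es *\<^sub>v w)"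
    unfolding A2_def by (rule assoc_mult_mat_vec) (use wc in auto)
  finally have Me: "M *\<^sub>v e = cc \<cdot>\<^sub>v (mat_adjoint U *\<^sub>v (?Es *\<^sub>v w))" .
  define Y where "Y = mat_adjoint U * (?Es * ?E) * U"
  have Yc: "Y \<in> carrier_mat (2^n) (2^n)" by (simp add: Y_def)
  have "Y *\<^sub>v e = (mat_adjoint U * (?Es * ?E)) *\<^sub>v v"
    unfolding Y_def v_def by (rule assoc_mult_mat_vec) (use ec in auto)
  also have "\<dots> = mat_adjoint U *\<^sub>v ((?Es * ?E) *\<^sub>v v)"
    by (rule assoc_mult_mat_vec) (use vc in auto)
  also have "(?Es * ?E) *\<^sub>v v = ?Es *\<^sub>v w"
    unfolding w_def by (rule assoc_mult_mat_vec) (use vc in auto)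
  finally have Ye: "Y *\<^sub>v e = mat_adjoint U *\<^sub>v (?Es *\<^sub>v w)" .
  have "M $$ (r, y) = (M *\<^sub>v e) $ r"
    unfolding e_def mult_unit_vec[OF Mc y] using Mc r y by simp
  also have "\<dots> = cc * (Y *\<^sub>v e) $ r" unfolding Me Ye using r by simp
  also have "(Y *\<^sub>v e) $ r = Y $$ (r, y)"
    unfolding e_def mult_unit_vec[OF Yc y] using Yc r y by simp
  finally show ?thesis by (simp add: M_def A2_def Y_def s_def)
qed

end


context code begin

lemma L_Y:
  assumes "length Es = n" "length E = n"
  shows "\<exists>cY P. length P = n \<and> cmod cY = 1 \<and>
     mat_adjoint U * (pauli_mat n Es * pauli_mat n E) * U = cY \<cdot>\<^sub>m pauli_mat n P"
proof -
  define ph0 where "ph0 = (\<Prod>q<n. ph (Es!q) (E!q))"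
  have N: "pauli_mat n Es * pauli_mat n E = ph0 \<cdot>\<^sub>m pauli_mat n (pmul Es E)"
    unfolding ph0_def by (rule pauli_mult[OF assms])
  obtain c P where P: "length P = n" "c * c = 1" "mat_adjoint U * pauli_mat n (pmul Es E) * U = c \<cdot>\<^sub>m pauli_mat n P"
    using cliff_inv[of "pmul Es E"] assms by auto
  have "mat_adjoint U * (pauli_mat n Es * pauli_mat n E) * U = ph0 \<cdot>\<^sub>m (c \<cdot>\<^sub>m pauli_mat n P)"
    unfolding N using conj_smult(2)[of "pauli_mat n (pmul Es E)" ph0] P(3) by simp
  also have "\<dots> = (ph0 * c) \<cdot>\<^sub>m pauli_mat n P" by (simp add: smult_smult_mat)
  finally have e: "mat_adjoint U * (pauli_mat n Es * pauli_mat n E) * U = (ph0 * c) \<cdot>\<^sub>m pauli_mat n P" .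
  have "cmod ph0 = 1" unfolding ph0_def prod_norm[symmetric] by (simp add: cmod_ph)
  moreover have "cmod c = 1"
  proof -
    have "cmod c * cmod c = 1" using P(2) by (metis norm_mult norm_one)
    then show ?thesis by (metis abs_norm_cancel mult_cancel_left1 norm_ge_zero abs_mult_self_eq abs_of_nonneg real_sqrt_abs2 real_sqrt_one power2_eq_square)
  qed
  ultimately have "cmod (ph0 * c) = 1" by (simp add: norm_mult)
  then show ?thesis using e P(1) by blast
qed

lemma L_comm_N:
  assumes lEs: "length Es = n" and lE: "length E = n"
    and syn: "syndrome n k U (pauli_mat n Es) = syndrome n k U (pauli_mat n E)"
    and j: "j < n - k"
  shows "(pauli_mat n Es * pauli_mat n E) * stab_gen n k U j = stab_gen n k U j * (pauli_mat n Es * pauli_mat n E)"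
proof -
  let ?g = "stab_gen n k U j" and ?E = "pauli_mat n E" and ?Es = "pauli_mat n Es"
  define \<sigma> :: complex where "\<sigma> = (if syndrome n k U ?E ! j then -1 else 1)"
  have s1: "?Es * ?g = \<sigma> \<cdot>\<^sub>m (?g * ?Es)" using sign_comm[OF lEs j] syn \<sigma>_def by simp
  have s2: "?E * ?g = \<sigma> \<cdot>\<^sub>m (?g * ?E)" using sign_comm[OF lE j] \<sigma>_def by simp
  have ss: "\<sigma> * \<sigma> = 1" by (simp add: \<sigma>_def)
  have "(?Es * ?E) * ?g = ?Es * (?E * ?g)" by (simp add: asc)
  also have "\<dots> = ?Es * (\<sigma> \<cdot>\<^sub>m (?g * ?E))" using s2 by simp
  also have "\<dots> = \<sigma> \<cdot>\<^sub>m ((?Es * ?g) * ?E)" by (simp add: sm2 asc)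
  also have "\<dots> = \<sigma> \<cdot>\<^sub>m ((\<sigma> \<cdot>\<^sub>m (?g * ?Es)) * ?E)" using s1 by simp
  also have "\<dots> = (\<sigma> * \<sigma>) \<cdot>\<^sub>m (?g * (?Es * ?E))" by (simp add: sm1 asc smult_smult_mat)
  also have "\<dots> = ?g * (?Es * ?E)" using ss by simp
  finally show ?thesis .
qed

lemma L_IZ:
  assumes lP: "length P = n" and cY: "cY \<noteq> 0"
    and Y: "mat_adjoint U * Nm * U = cY \<cdot>\<^sub>m pauli_mat n P"
    and Nc: "Nm \<in> carrier_mat (2^n) (2^n)"
    and comm: "\<forall>j<n-k. Nm * stab_gen n k U j = stab_gen n k U j * Nm"
  shows "\<forall>j<n-k. P!(k+j) = PI \<or> P!(k+j) = PZ"
proof (intro allI impI)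
  fix j assume j: "j < n - k"
  let ?g = "stab_gen n k U j" and ?Z = "pauli_mat n (Zl n (k+j))"
  have gz: "mat_adjoint U * ?g * U = ?Z" using gen_form[OF j] conj_back(1)[of ?Z] by simp
  have "(mat_adjoint U * Nm * U) * ?Z = mat_adjoint U * (Nm * ?g) * U"
    unfolding gz[symmetric] by (rule conjinv_mult) (simp_all add: Nc)
  also have "\<dots> = mat_adjoint U * (?g * Nm) * U" using comm j by simp
  also have "\<dots> = ?Z * (mat_adjoint U * Nm * U)"
    unfolding gz[symmetric] by (rule conjinv_mult[symmetric]) (simp_all add: Nc)
  finally have "(cY \<cdot>\<^sub>m pauli_mat n P) * ?Z = ?Z * (cY \<cdot>\<^sub>m pauli_mat n P)" unfolding Y .
  then have "cY \<cdot>\<^sub>m (pauli_mat n P * ?Z) = cY \<cdot>\<^sub>m (?Z * pauli_mat n P)" by (simp add: sm1 sm2)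
  then have "(1/cY) \<cdot>\<^sub>m (cY \<cdot>\<^sub>m (pauli_mat n P * ?Z)) = (1/cY) \<cdot>\<^sub>m (cY \<cdot>\<^sub>m (?Z * pauli_mat n P))" by simp
  then have "pauli_mat n P * ?Z = ?Z * pauli_mat n P" using cY by (simp add: smult_smult_mat)
  then show "P!(k+j) = PI \<or> P!(k+j) = PZ"
    using Z_on_comm[OF lP, of "k+j"] j kn by (simp add: Z_on_Zl)
qed

lemma L_trace:
  assumes lP: "length P = n" and lE: "length E = n" and lEs: "length (T (syndrome n k U (pauli_mat n E))) = n"
    and Y: "mat_adjoint U * (pauli_mat n (T (syndrome n k U (pauli_mat n E))) * pauli_mat n E) * U = cY \<cdot>\<^sub>m pauli_mat n P"
    and IZ: "\<forall>j<n-k. P!(k+j) = PI \<or> P!(k+j) = PZ"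
    and l: "l < 2^(n-k)"
  shows "mtrace (W_op n k U T p l E (syndrome n k U (pauli_mat n E)))
       = complex_of_real (sqrt (depol_prob n p E)) * cY * (if l = 0 then \<Prod>q<k. tr1 (P!q) else 0)"
proof -
  define s where "s = syndrome n k U (pauli_mat n E)"
  define sq where "sq = complex_of_real (sqrt (depol_prob n p E))"
  define m where "m = n - k"
  have nkm: "n = k + m" using kn m_def by simp
  have lm: "l < 2^m" using l m_def by simp
  define M where "M = mat_adjoint U * pauli_mat n (T s) * synd_proj n k U s * (sq \<cdot>\<^sub>m pauli_mat n E) * U"
  have W: "W_op n k U T p l E s = mat (2^k) (2^k) (\<lambda>(a, b). M $$ (a * 2^m + l, b * 2^m))"
    unfolding W_op_def Let_def M_def sq_def m_def ..
  have ent: "M $$ (a * 2^m + l, a * 2^m) = sq * cY * pauli_mat n P $$ (a * 2^m + l, a * 2^m)"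
    if a: "a < 2^k" for a
  proof -
    have r: "a * 2^m + l < 2^n" using idx_bound[OF a lm] nkm by simp
    have y: "a * 2^m < 2^n" using idx_bound[OF a, of 0 m] nkm by simp
    have yb: "\<forall>j<n-k. qbit n (k+j) (a * 2^m) = 0" using qbit_lo0[of _ m n k] nkm by simp
    have "M $$ (a * 2^m + l, a * 2^m) =
       sq * (mat_adjoint U * (pauli_mat n (T s) * pauli_mat n E) * U) $$ (a * 2^m + l, a * 2^m)"
      unfolding M_def s_def by (rule M_col[OF lE _ y yb r]) (use lEs s_def in simp)
    also have "\<dots> = sq * (cY \<cdot>\<^sub>m pauli_mat n P) $$ (a * 2^m + l, a * 2^m)" using Y s_def by simp
    also have "\<dots> = sq * cY * pauli_mat n P $$ (a * 2^m + l, a * 2^m)" using r y by simp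
    finally show ?thesis .
  qed
  have "mtrace (W_op n k U T p l E s) = (\<Sum>a<2^k. M $$ (a * 2^m + l, a * 2^m))"
    unfolding W mtrace_def by simp
  also have "\<dots> = (\<Sum>a<2^k. sq * cY * pauli_mat n P $$ (a * 2^m + l, a * 2^m))"
    by (rule sum.cong) (simp_all add: ent)
  also have "\<dots> = sq * cY * (\<Sum>a<2^k. pauli_mat n P $$ (a * 2^m + l, a * 2^m))"
    by (simp add: sum_distrib_left)
  also have "(\<Sum>a<2^k. pauli_mat n P $$ (a * 2^m + l, a * 2^m)) = (if l = 0 then \<Prod>q<k. tr1 (P!q) else 0)"
    using block_sum[of P k m l] lP IZ lm nkm by simp
  finally show ?thesis by (simp add: s_def sq_def)
qed

end


context code begin

lemma reps_facts:
  assumes reps: "syndrome_reps n k U T" and ls: "length s = n - k"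
  shows "length (T s) = n" "syndrome n k U (pauli_mat n (T s)) = s"
  using reps ls by (auto simp: syndrome_reps_def)

lemma L_inTS:
  assumes reps: "syndrome_reps n k U T" and lE: "length E = n" and lP: "length P = n" and cY: "cY \<noteq> 0"
    and Y: "mat_adjoint U * (pauli_mat n (T (syndrome n k U (pauli_mat n E))) * pauli_mat n E) * U = cY \<cdot>\<^sub>m pauli_mat n P"
    and IZ: "\<forall>j<n-k. P!(k+j) = PI \<or> P!(k+j) = PZ"
  shows "in_TS n k U T E \<longleftrightarrow> (\<forall>q<k. P!q = PI)"
proof -
  define s where "s = syndrome n k U (pauli_mat n E)"
  have ls: "length s = n - k" by (simp add: s_def)
  note rs = reps_facts[OF reps ls]
  let ?E = "pauli_mat n E" and ?Es = "pauli_mat n (T s)"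
  define Nm where "Nm = ?Es * ?E"
  have Nc: "Nm \<in> carrier_mat (2^n) (2^n)" by (simp add: Nm_def)
  have Y': "mat_adjoint U * Nm * U = cY \<cdot>\<^sub>m pauli_mat n P" using Y by (simp add: Nm_def s_def)
  have EN: "?E = ?Es * Nm" unfolding Nm_def using psq2[OF rs(1), of ?E] by simp
  show ?thesis
  proof
    assume allI': "\<forall>q<k. P!q = PI"
    have PD: "P \<in> Dset" unfolding Dset_def
    proof (intro CollectI conjI allI impI)
      show "length P = n" by (rule lP)
    next
      fix q assume "q < k" then show "P!q = PI" using allI' by simp
    next
      fix q assume q: "q < n"
      show "P!q \<in> {PI,PZ}"
      proof (cases "q < k")
        case True then show ?thesis using allI' by simp
      next
        case False
        then have "P!(k + (q - k)) = PI \<or> P!(k + (q - k)) = PZ" using IZ[rule_format, of "q - k"] q by simp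
        then show ?thesis using False by simp
      qed
    qed
    define g where "g = U * pauli_mat n P * mat_adjoint U"
    have gS: "g \<in> stab_group n k U" unfolding g_def by (rule D_stab[OF PD])
    have "Nm = U * (mat_adjoint U * Nm * U) * mat_adjoint U" using conj_back(2)[OF Nc] by simp
    also have "\<dots> = cY \<cdot>\<^sub>m g" unfolding Y' g_def by (rule conj_smult(1)) simp
    finally have "Nm = cY \<cdot>\<^sub>m g" .
    then have "?E = cY \<cdot>\<^sub>m (?Es * g)" using EN by (simp add: sm2 g_def)
    then show "in_TS n k U T E" unfolding in_TS_def using ls gS by blast
  next
    assume "in_TS n k U T E"
    then obtain s' g c0 where s': "length s' = n - k" and gS: "g \<in> stab_group n k U"
      and Eg: "?E = c0 \<cdot>\<^sub>m (pauli_mat n (T s') * g)" unfolding in_TS_def by blast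
    obtain D where D: "D \<in> Dset" "g = U * pauli_mat n D * mat_adjoint U" using stab_D[OF gS] by blast
    note rs' = reps_facts[OF reps s']
    let ?Es' = "pauli_mat n (T s')"
    have gc: "g \<in> carrier_mat (2^n) (2^n)" using D by simp
    have syn: "s' = s"
    proof (rule nth_equalityI)
      show "length s' = length s" using s' ls by simp
      fix j assume "j < length s'"
      then have j: "j < n - k" using s' by simp
      let ?gj = "stab_gen n k U j"
      define \<sigma>' :: complex where "\<sigma>' = (if s'!j then -1 else 1)"
      define \<sigma> :: complex where "\<sigma> = (if s!j then -1 else 1)"
      have c1: "?Es' * ?gj = \<sigma>' \<cdot>\<^sub>m (?gj * ?Es')" using sign_comm[OF rs'(1) j] rs'(2) \<sigma>'_def by simp
      have c2: "?E * ?gj = \<sigma> \<cdot>\<^sub>m (?gj * ?E)" using sign_comm[OF lE j] \<sigma>_def s_def by simp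
      have Zl: "Zl n (k+j) \<in> Dset" using j kn by (auto simp: Dset_def Zl_nth)
      have ggj: "g * ?gj = ?gj * g"
        unfolding D(2) gen_form[OF j] by (simp add: conj_mult D_comm[OF D(1) Zl])
      have "?E * ?gj = c0 \<cdot>\<^sub>m (?Es' * (g * ?gj))" unfolding Eg by (simp add: sm1 asc gc)
      also have "\<dots> = c0 \<cdot>\<^sub>m ((?Es' * ?gj) * g)" unfolding ggj by (simp add: asc gc)
      also have "\<dots> = \<sigma>' \<cdot>\<^sub>m (?gj * (c0 \<cdot>\<^sub>m (?Es' * g)))" unfolding c1 by (simp add: sm1 sm2 asc gc smult_smult_mat mult.commute)
      finally have e1: "?E * ?gj = \<sigma>' \<cdot>\<^sub>m (?gj * ?E)" unfolding Eg .
      have inv: "(?gj * ?E) * (?E * ?gj) = 1\<^sub>m (2^n)" using lE j by (simp add: asc g_sq)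
      have "\<sigma> \<cdot>\<^sub>m (?gj * ?E) = \<sigma>' \<cdot>\<^sub>m (?gj * ?E)" using c2 e1 by simp
      then have "\<sigma> = \<sigma>'" by (rule cancel_inv[OF _ _ inv, rotated 2]) simp_all
      then show "s'!j = s!j" unfolding \<sigma>_def \<sigma>'_def by (auto split: if_splits)
    qed
    have "Nm = ?Es * (c0 \<cdot>\<^sub>m (?Es * g))" unfolding Nm_def using Eg syn by simp
    also have "\<dots> = c0 \<cdot>\<^sub>m g" using rs(1) gc by (simp add: sm2)
    finally have Ng: "Nm = c0 \<cdot>\<^sub>m g" .
    have "cY \<cdot>\<^sub>m pauli_mat n P = c0 \<cdot>\<^sub>m pauli_mat n D"
      unfolding Y'[symmetric] Ng D(2) using conj_smult(2)[of "U * pauli_mat n D * mat_adjoint U" c0]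
        conj_back(1)[of "pauli_mat n D"] by simp
    then have "(1/cY) \<cdot>\<^sub>m (cY \<cdot>\<^sub>m pauli_mat n P) = (1/cY) \<cdot>\<^sub>m (c0 \<cdot>\<^sub>m pauli_mat n D)" by simp
    then have "pauli_mat n P = (c0 / cY) \<cdot>\<^sub>m pauli_mat n D" using cY by (simp add: smult_smult_mat)
    then have "P = D" using pauli_inj[OF lP] D(1) by (simp add: Dset_def)
    then show "\<forall>q<k. P!q = PI" using D(1) by (simp add: Dset_def)
  qed
qed

end


lemma tr1_PI: "tr1 PI = 2" by (simp add: tr1_def)
lemma tr1_nPI: "a \<noteq> PI \<Longrightarrow> tr1 a = 0" by (cases a) (auto simp: tr1_def)

theorem lemma3:
  fixes n k :: nat and U :: "complex mat" and T :: "bool list \<Rightarrow> pauli1 list"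
    and p :: real and E :: "pauli1 list"
  assumes "k \<le> n"
    and "clifford n U"
    and "syndrome_reps n k U T"
    and "0 \<le> p" and "p \<le> 1"
    and "length E = n"
  shows "(1 / 2 ^ (2 * k)) *
           (\<Sum>l<2 ^ (n - k). (cmod (mtrace (W_op n k U T p l E
               (syndrome n k U (pauli_mat n E)))))\<^sup>2)
         = (if in_TS n k U T E then depol_prob n p E else 0)"
proof -
  interpret code n U k by unfold_locales (use assms in auto)
  note lE = assms(6)
  define s where "s = syndrome n k U (pauli_mat n E)"
  have ls: "length s = n - k" by (simp add: s_def)
  note rs = reps_facts[OF assms(3) ls]
  obtain cY P where lP: "length P = n" and cY1: "cmod cY = 1"
    and Y: "mat_adjoint U * (pauli_mat n (T s) * pauli_mat n E) * U = cY \<cdot>\<^sub>m pauli_mat n P"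
    using L_Y[OF rs(1) lE] by blast
  have cY0: "cY \<noteq> 0" using cY1 by auto
  have comm: "\<forall>j<n-k. (pauli_mat n (T s) * pauli_mat n E) * stab_gen n k U j = stab_gen n k U j * (pauli_mat n (T s) * pauli_mat n E)"
    using L_comm_N[OF rs(1) lE] rs(2) s_def by simp
  have IZ: "\<forall>j<n-k. P!(k+j) = PI \<or> P!(k+j) = PZ"
    by (rule L_IZ[OF lP cY0 Y _ comm]) simp
  define sq where "sq = complex_of_real (sqrt (depol_prob n p E))"
  define Pi where "Pi = (\<Prod>q<k. tr1 (P!q))"
  have tr: "mtrace (W_op n k U T p l E (syndrome n k U (pauli_mat n E))) = sq * cY * (if l = 0 then Pi else 0)"
    if "l < 2^(n-k)" for l
    using L_trace[OF lP lE _ _ IZ that, of T cY p] rs(1) Y s_def sq_def Pi_def by simp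
  have "(\<Sum>l<2 ^ (n - k). (cmod (mtrace (W_op n k U T p l E (syndrome n k U (pauli_mat n E)))))\<^sup>2)
      = (\<Sum>l::nat<2 ^ (n - k). if l = 0 then (cmod (sq * cY * Pi))\<^sup>2 else 0)"
    by (rule sum.cong) (simp_all add: tr)
  also have "\<dots> = (cmod (sq * cY * Pi))\<^sup>2" by (simp add: sum.delta)
  also have "\<dots> = depol_prob n p E * (cmod Pi)\<^sup>2"
  proof -
    have dp: "0 \<le> depol_prob n p E" unfolding depol_prob_def using assms(4,5) by simp
    have "cmod sq = sqrt (depol_prob n p E)" unfolding sq_def using dp by simp
    then show ?thesis using dp cY1 by (simp add: norm_mult power_mult_distrib)
  qed
  finally have S: "(\<Sum>l<2 ^ (n - k). (cmod (mtrace (W_op n k U T p l E (syndrome n k U (pauli_mat n E)))))\<^sup>2)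
      = depol_prob n p E * (cmod Pi)\<^sup>2" .
  have iff: "in_TS n k U T E \<longleftrightarrow> (\<forall>q<k. P!q = PI)"
    by (rule L_inTS[OF assms(3) lE lP cY0 _ IZ]) (use Y s_def in simp)
  show ?thesis
  proof (cases "\<forall>q<k. P!q = PI")
    case True
    have "Pi = (\<Prod>q<k. 2)" unfolding Pi_def by (rule prod.cong) (simp_all add: True tr1_PI)
    then have "Pi = 2^k" by simp
    then have "(cmod Pi)\<^sup>2 = 2^(2*k)" by (simp add: norm_power power_mult[symmetric] mult.commute)
    then show ?thesis unfolding S using iff True by simp
  next
    case False
    then obtain q where q: "q < k" "P!q \<noteq> PI" by blast
    have "Pi = 0" unfolding Pi_def using q by (intro prod_zero) (auto simp: tr1_nPI intro!: bexI[of _ q])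
    then show ?thesis unfolding S using iff False by simp
  qed
qed


end
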